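(* Let $A,C,\varepsilon_g$ be positive constants with $\varepsilon_g<1/2$, and let $r>0$ be a fixed constant. For $N$ sufficiently large the following holds: whenever $x<y$ are in $I_W$ with $|x-y|\ge N^{\varepsilon_g}$, there do not exist real numbers $D_1,D_2,D_3,D_4$ with $r^2\le D_1^2+D_2^2+D_3^2+D_4^2\le N^{A}$ such that \[\sum_{i=1}^n\|D_1b_i(x)+D_2c_i(x)+D_3b_i(y)+D_4c_i(y)\|_{\mathbb R/\mathbb Z}^2\le C\log N.\]
   Context: Let $0<c_1<c_2$ be constants, $n$ a large integer and $M$ a large parameter (possibly growing with $n$) with $I_W:=[c_1M,c_2M]\subset[0,\sqrt n-M]$; set $N:=M$. For $x>0$ and $1\le i\le n$ let $b_i(x)=\sqrt N\,e^{-x^2/2}\,x^i/\sqrt{i!}$ and $c_i(x)=b_i'(x)=\sqrt N\,e^{-x^2/2}\,\frac{i-x^2}{x}\,\frac{x^i}{\sqrt{i!}}$. For $t\in\mathbb R$, $\|t\|_{\mathbb R/\mathbb Z}$ denotes the distance from $t$ to the nearest integer. *)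

theory Defs
  imports Complex_Main
begin

definition dist_Z :: "real \<Rightarrow> real" where
  "dist_Z t = \<bar>t - of_int (round t)\<bar>"

definition bfun :: "real \<Rightarrow> nat \<Rightarrow> real \<Rightarrow> real" where
  "bfun N i x = sqrt N * exp (- (x^2) / 2) * x ^ i / sqrt (fact i)"

definition cfun :: "real \<Rightarrow> nat \<Rightarrow> real \<Rightarrow> real" where
  "cfun N i x = sqrt N * exp (- (x^2) / 2) * ((real i - x^2) / x) * x ^ i / sqrt (fact i)"

end

theory Submission
  imports Defs "HOL-Real_Asymp.Real_Asymp"
begin

definition lw :: "real \<Rightarrow> nat \<Rightarrow> real" where
  "lw z i = real i * ln z - z^2/2 - ln (fact i)/2"

lemma bfun_lw: assumes "z > 0" shows "bfun M i z = sqrt M * exp (lw z i)"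
proof -
  have f: "fact i > (0::real)" by simp
  have l: "lw z i = (real i * ln z + (-(z^2)/2)) - ln (fact i)/2" by (simp add: lw_def)
  have "exp (lw z i) = exp (real i * ln z) * exp (-(z^2)/2) / exp (ln (fact i)/2)"
    by (simp only: l exp_diff exp_add)
  also have "exp (real i * ln z) = z ^ i" using assms by (simp add: exp_of_nat_mult)
  also have "exp (ln (fact i)/2) = sqrt (fact i)"
    using f by (simp add: powr_half_sqrt[symmetric] powr_def)
  finally show ?thesis unfolding bfun_def by simp
qed

lemma cfun_bfun: "cfun M i z = bfun M i z * ((real i - z^2)/z)"
  unfolding cfun_def bfun_def by (simp add: field_simps)

lemma pow_fact_le_exp: assumes "(t::real) \<ge> 0" shows "t ^ n / fact n \<le> exp t"
proof -
  have s: "(\<lambda>n. t^n /\<^sub>R fact n) sums exp t" by (rule exp_converges)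
  have "t ^ n / fact n = (\<lambda>k. t^k /\<^sub>R fact k) n" by (simp add: divide_simps)
  also have "\<dots> \<le> (\<Sum>k<Suc n. t^k /\<^sub>R fact k)"
    using assms by (intro member_le_sum) auto
  also have "\<dots> \<le> suminf (\<lambda>n. t^n /\<^sub>R fact n)"
    by (rule sum_le_suminf[OF sums_summable[OF s]]) (use assms in auto)
  also have "\<dots> = exp t" using sums_unique[OF s] by simp
  finally show ?thesis by (simp add: divide_simps)
qed

lemma lw_le0: assumes "z > 0" shows "lw z i \<le> 0"
proof -
  have "(z^2) ^ i / fact i \<le> exp (z^2)" by (rule pow_fact_le_exp) simp
  hence "ln ((z^2) ^ i / fact i) \<le> ln (exp (z^2))"
    using assms by (intro ln_mono) auto
  hence "ln ((z^2) ^ i / fact i) \<le> z^2" by simp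
  moreover have "ln ((z^2) ^ i / fact i) = 2 * real i * ln z - ln (fact i)"
    using assms by (simp add: ln_div ln_realpow)
  ultimately show ?thesis unfolding lw_def by simp
qed

lemma lw_Suc: assumes "z > 0" shows "lw z (Suc i) - lw z i = ln z - ln (real (Suc i))/2"
proof -
  have "ln (fact (Suc i) :: real) = ln (real (Suc i)) + ln (fact i)"
    by (simp add: ln_mult del: of_nat_Suc)
  thus ?thesis unfolding lw_def by (simp add: algebra_simps)
qed

lemma ln_lower_aux: assumes "(t::real) \<ge> 0" shows "2*t/(2+t) \<le> ln (1+t)"
proof -
  let ?f = "\<lambda>t::real. ln (1+t) - 2*t/(2+t)"
  have "?f 0 \<le> ?f t"
  proof (rule DERIV_nonneg_imp_nondecreasing[OF assms])
    fix s :: real assume s0: "0 \<le> s" "s \<le> t"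
    hence s: "0 \<le> s \<and> s \<le> t" by simp
    have "DERIV ?f s :> (1/(1+s) - 4/(2+s)^2)"
      using s by (auto intro!: derivative_eq_intros simp: field_simps power2_eq_square)
    moreover have "1/(1+s) - 4/(2+s)^2 = s^2/((1+s)*(2+s)^2)"
      using s by (simp add: divide_simps) (simp add: algebra_simps power2_eq_square)
    moreover have "s^2/((1+s)*(2+s)^2) \<ge> 0" using s by simp
    ultimately have "DERIV ?f s :> (1/(1+s) - 4/(2+s)^2) \<and> 1/(1+s) - 4/(2+s)^2 \<ge> 0" by simp
    thus "\<exists>y. DERIV ?f s :> y \<and> 0 \<le> y" by blast
  qed
  thus ?thesis by simp
qed

lemma ln_fact_upper: assumes "i \<ge> 1" shows "ln (fact i :: real) \<le> 1 + (real i + 1/2) * ln (real i) - real i"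
  using assms
proof (induction i rule: dec_induct)
  case base then show ?case by simp
next
  case (step k)
  have k: "real k \<ge> 1" using step by simp
  have "2*(1/real k)/(2+1/real k) \<le> ln (1 + 1/real k)" by (rule ln_lower_aux) simp
  also have "1 + 1/real k = real (Suc k) / real k" using k by (simp add: field_simps)
  also have "ln (real (Suc k) / real k) = ln (real (Suc k)) - ln (real k)" using k by (simp add: ln_div)
  finally have h: "2*(1/real k)/(2+1/real k) \<le> ln (real (Suc k)) - ln (real k)" .
  have e: "2*(1/real k)/(2+1/real k) = 1 / (real k + 1/2)" using k by (simp add: field_simps)
  have h2: "1 \<le> (real k + 1/2) * (ln (real (Suc k)) - ln (real k))"
    using h e k by (simp add: field_simps)
  have "ln (fact (Suc k) :: real) = ln (real (Suc k)) + ln (fact k)"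
    by (simp add: ln_mult del: of_nat_Suc)
  thus ?case using step.IH h2 by (simp add: algebra_simps)
qed

lemma ln_sq: "(z::real) > 0 \<Longrightarrow> ln (z^2) = 2 * ln z"
  by (simp add: ln_realpow)

lemma lw_center:
  assumes z: "z \<ge> 1" and i: "i \<ge> 1" and c: "(real i - z^2)^2 \<le> z^2"
  shows "2 * lw z i \<ge> -2 - ln (2*z)"
proof -
  have ri: "real i \<ge> 1" using i by simp
  have zz: "z^2 > 0" using z by simp
  have st: "ln (fact i :: real) \<le> 1 + (real i + 1/2) * ln (real i) - real i"
    by (rule ln_fact_upper[OF i])
  have "ln (real i / z^2) \<le> real i / z^2 - 1" using ri zz by (intro ln_le_minus_one) simp
  hence l1: "ln (real i) - 2 * ln z \<le> real i / z^2 - 1"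
    using ri z by (simp add: ln_div ln_sq)
  have "real i * (ln (real i) - 2 * ln z) \<le> real i * (real i / z^2 - 1)"
    using l1 ri by (intro mult_left_mono) auto
  hence l2: "real i * ln (real i) - 2 * real i * ln z \<le> real i^2 / z^2 - real i"
    by (simp add: algebra_simps power2_eq_square)
  have sq: "real i^2 / z^2 - 2 * real i + z^2 = (real i - z^2)^2 / z^2"
  proof -
    have z2: "z^2 \<noteq> 0" using zz by simp
    have h: "(real i - z^2)^2 = real i^2 - 2*real i*z^2 + z^2*z^2" by (simp add: power2_eq_square algebra_simps)
    have e1: "z^2*z^2/z^2 = z^2" by (rule nonzero_mult_div_cancel_right[OF z2])
    have e2: "2*real i*z^2/z^2 = 2*real i" by (rule nonzero_mult_div_cancel_right[OF z2])
    have "(real i - z^2)^2 / z^2 = real i^2/z^2 - 2*real i*z^2/z^2 + z^2*z^2/z^2"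
      unfolding h by (simp only: add_divide_distrib diff_divide_distrib)
    thus ?thesis using e1 e2 by linarith
  qed
  have sq2: "(real i - z^2)^2 / z^2 \<le> 1" using c zz by simp
  have "real i \<le> z^2 + z"
  proof -
    have "\<bar>real i - z^2\<bar> \<le> z" using c z
      by (metis abs_le_square_iff abs_of_nonneg linear not_one_le_zero order_trans)
    thus ?thesis by linarith
  qed
  moreover have "z * 1 \<le> z * z" by (rule mult_left_mono) (use z in auto)
  ultimately have "real i \<le> (2*z)^2" by (simp add: power2_eq_square)
  hence "ln (real i) \<le> ln ((2*z)^2)" using ri by (intro ln_mono) auto
  moreover have "ln ((2*z)^2) = 2 * ln (2*z)" by (rule ln_sq) (use z in simp)
  ultimately have l3: "ln (real i) \<le> 2 * ln (2*z)" by linarith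
  have "2 * lw z i = 2 * real i * ln z - z^2 - ln (fact i)" unfolding lw_def by simp
  thus ?thesis using st l2 sq sq2 l3 by (simp add: algebra_simps)
qed

lemma incr_sum_le:
  fixes f :: "nat \<Rightarrow> real"
  assumes "j \<le> i" "\<And>k. j \<le> k \<Longrightarrow> k < i \<Longrightarrow> f (Suc k) - f k \<le> c"
  shows "f i - f j \<le> real (i - j) * c"
  using assms
proof (induction i rule: dec_induct)
  case base then show ?case by simp
next
  case (step k)
  have "f (Suc k) - f k \<le> c" using step by auto
  moreover have "f k - f j \<le> real (k - j) * c" using step by auto
  moreover have "real (Suc k - j) = real (k - j) + 1" using step by simp
  ultimately show ?case by (simp add: algebra_simps)
qed

lemma incr_sum_ge:
  fixes f :: "nat \<Rightarrow> real"
  assumes "j \<le> i" "\<And>k. j \<le> k \<Longrightarrow> k < i \<Longrightarrow> f (Suc k) - f k \<ge> c"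
  shows "f i - f j \<ge> real (i - j) * c"
proof -
  have "(\<lambda>k. - f k) i - (\<lambda>k. - f k) j \<le> real (i - j) * (-c)"
  proof (rule incr_sum_le[OF assms(1)])
    fix k assume "j \<le> k" "k < i"
    hence "c \<le> f (Suc k) - f k" using assms(2) by blast
    thus "(\<lambda>k. - f k) (Suc k) - (\<lambda>k. - f k) k \<le> - c" by simp
  qed
  thus ?thesis by simp
qed

lemma lw_left_tail:
  assumes z: "z > 0" and ij: "i \<le> j" and j1: "j \<ge> 1" and jz: "real j \<le> z^2"
  shows "lw z i \<le> - real (j - i) * (z^2 - real j) / (2 * z^2)"
proof -
  have inc: "lw z (Suc k) - lw z k \<ge> (2 * ln z - ln (real j)) / 2" if "i \<le> k" "k < j" for k
  proof -
    have "ln (real (Suc k)) \<le> ln (real j)" using that by (intro ln_mono) auto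
    thus ?thesis using lw_Suc[OF z, of k] by simp
  qed
  have "lw z j - lw z i \<ge> real (j - i) * ((2 * ln z - ln (real j)) / 2)"
    by (rule incr_sum_ge[where f="lw z"]) (use ij inc in auto)
  moreover have "lw z j \<le> 0" by (rule lw_le0[OF z])
  moreover have "ln (real j / z^2) \<le> real j / z^2 - 1" using j1 z by (intro ln_le_minus_one) simp
  hence "(2 * ln z - ln (real j)) \<ge> (z^2 - real j) / z^2"
    using j1 z by (simp add: ln_div ln_sq diff_divide_distrib)
  moreover have "(z^2 - real j) / z^2 / 2 \<le> (2 * ln z - ln (real j)) / 2"
    using calculation(3) by (rule divide_right_mono) simp
  hence "real (j - i) * ((z^2 - real j) / z^2 / 2) \<le> real (j - i) * ((2 * ln z - ln (real j)) / 2)"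
    by (rule mult_left_mono) auto
  ultimately have "lw z i \<le> - real (j - i) * ((z^2 - real j) / z^2 / 2)"
    by linarith
  thus ?thesis by simp
qed

lemma lw_right_tail:
  assumes z: "z > 0" and ij: "j \<le> i" and jz: "real j \<ge> z^2"
  shows "lw z i \<le> - real (i - j) * (real j + 1 - z^2) / (2 * (real j + 1))"
proof -
  have inc: "lw z (Suc k) - lw z k \<le> (2 * ln z - ln (real j + 1)) / 2" if "j \<le> k" "k < i" for k
  proof -
    have "ln (real j + 1) \<le> ln (real (Suc k))" using that by (intro ln_mono) auto
    thus ?thesis using lw_Suc[OF z, of k] by simp
  qed
  have "lw z i - lw z j \<le> real (i - j) * ((2 * ln z - ln (real j + 1)) / 2)"
    by (rule incr_sum_le[where f="lw z"]) (use ij inc in auto)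
  moreover have "lw z j \<le> 0" by (rule lw_le0[OF z])
  moreover have "ln (z^2 / (real j + 1)) \<le> z^2 / (real j + 1) - 1" using z by (intro ln_le_minus_one) simp
  hence "(2 * ln z - ln (real j + 1)) \<le> (z^2 - (real j + 1)) / (real j + 1)"
    using z by (simp add: ln_div ln_sq diff_divide_distrib)
  moreover have "(2 * ln z - ln (real j + 1)) / 2 \<le> (z^2 - (real j + 1)) / (real j + 1) / 2"
    using calculation(3) by (rule divide_right_mono) simp
  hence "real (i - j) * ((2 * ln z - ln (real j + 1)) / 2) \<le> real (i - j) * ((z^2 - (real j + 1)) / (real j + 1) / 2)"
    by (rule mult_left_mono) auto
  ultimately have "lw z i \<le> real (i - j) * ((z^2 - (real j + 1)) / (real j + 1) / 2)"
    by linarith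
  thus ?thesis by (simp add: algebra_simps)
qed

lemma lw_incr_up:
  assumes z: "z > 0"
  shows "lw z (Suc k) - lw z k \<le> ((z^2 - real (Suc k)) / real (Suc k)) / 2"
proof -
  have "ln (z^2 / real (Suc k)) \<le> z^2 / real (Suc k) - 1" using z by (intro ln_le_minus_one) simp
  hence "2 * ln z - ln (real (Suc k)) \<le> (z^2 - real (Suc k)) / real (Suc k)"
    using z by (simp add: ln_div ln_sq diff_divide_distrib del: of_nat_Suc)
  hence "(2 * ln z - ln (real (Suc k))) / 2 \<le> ((z^2 - real (Suc k)) / real (Suc k)) / 2"
    by (rule divide_right_mono) auto
  moreover have E: "(2 * ln z - ln (real (Suc k))) / 2 = lw z (Suc k) - lw z k"
    using lw_Suc[OF z, of k] by simp
  ultimately show ?thesis by (simp only: E)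
qed

lemma lw_incr_down:
  assumes z: "z > 0"
  shows "lw z k - lw z (Suc k) \<le> (real (Suc k) - z^2) / (2 * z^2)"
proof -
  have "ln (real (Suc k) / z^2) \<le> real (Suc k) / z^2 - 1" using z by (intro ln_le_minus_one) simp
  hence "ln (real (Suc k)) - 2 * ln z \<le> (real (Suc k) - z^2) / z^2"
    using z by (simp add: ln_div ln_sq diff_divide_distrib del: of_nat_Suc)
  thus ?thesis using lw_Suc[OF z, of k] by simp
qed

lemma lw_negl_left:
  assumes x: "0 < x" and xy: "x < y" and i: "real i \<le> x^2"
  shows "lw y i \<le> lw x i - (y - x)^2 / 2"
proof -
  have d: "ln y - ln x \<ge> 0" using x xy by simp
  have "ln (y / x) \<le> y / x - 1" using x xy by (intro ln_le_minus_one) simp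
  hence e: "ln y - ln x \<le> y / x - 1" using x xy by (simp add: ln_div)
  have "real i * (ln y - ln x) \<le> x^2 * (ln y - ln x)" using i d by (intro mult_right_mono) auto
  also have "\<dots> \<le> x^2 * (y / x - 1)" using e by (intro mult_left_mono) auto
  also have "\<dots> = x * (y - x)" using x by (simp add: field_simps power2_eq_square)
  finally have "real i * (ln y - ln x) \<le> x * (y - x)" .
  moreover have "(y - x)^2 = y^2 - 2*(x*y) + x^2" "x * (y - x) = x*y - x^2"
    "real i * (ln y - ln x) = real i * ln y - real i * ln x" by (simp_all add: power2_eq_square algebra_simps)
  ultimately show ?thesis unfolding lw_def by linarith
qed

lemma lw_negl_right:
  assumes x: "0 < x" and xy: "x < y" and i: "real i \<ge> y^2"
  shows "lw x i \<le> lw y i - (y - x)^2 / 2"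
proof -
  have d: "ln x - ln y \<le> 0" using x xy by simp
  have "ln (x / y) \<le> x / y - 1" using x xy by (intro ln_le_minus_one) simp
  hence e: "ln x - ln y \<le> x / y - 1" using x xy by (simp add: ln_div)
  have "real i * (ln x - ln y) \<le> y^2 * (ln x - ln y)" using i d by (intro mult_right_mono_neg) auto
  also have "\<dots> \<le> y^2 * (x / y - 1)" using e by (intro mult_left_mono) auto
  also have "\<dots> = y * (x - y)" using x xy by (simp add: field_simps power2_eq_square)
  finally have "real i * (ln x - ln y) \<le> y * (x - y)" .
  moreover have "(y - x)^2 = y^2 - 2*(x*y) + x^2" "y * (x - y) = x*y - y^2"
    "real i * (ln x - ln y) = real i * ln x - real i * ln y" by (simp_all add: power2_eq_square algebra_simps)
  ultimately show ?thesis unfolding lw_def by linarith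
qed

lemma dist_Z_ge: assumes "\<bar>v\<bar> \<le> 1/2" shows "dist_Z v \<ge> \<bar>v\<bar>"
proof (cases "round v = 0")
  case True then show ?thesis by (simp add: dist_Z_def)
next
  case False
  hence "\<bar>real_of_int (round v)\<bar> \<ge> 1" by linarith
  thus ?thesis unfolding dist_Z_def using assms by linarith
qed

lemma dist_Z_nonneg: "dist_Z v \<ge> 0" by (simp add: dist_Z_def)

lemma card_close:
  fixes S :: "nat set"
  assumes "finite S" "\<And>j. j \<in> S \<Longrightarrow> \<bar>real j - c\<bar> < h" "h \<ge> 0"
  shows "real (card S) \<le> 2*h + 1"
proof (cases "S = {}")
  case True then show ?thesis using assms by simp
next
  case False
  define a where "a = Min S"
  define b where "b = Max S"
  have aS: "a \<in> S" and bS: "b \<in> S" using False assms(1) by (auto simp: a_def b_def)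
  have sub: "S \<subseteq> {a..b}" using assms(1) by (auto simp: a_def b_def)
  have "card S \<le> card {a..b}" by (rule card_mono) (use sub in auto)
  hence "card S \<le> b + 1 - a" by simp
  moreover have "a \<le> b" using sub aS by auto
  moreover have "real b - real a < 2*h" using assms(2)[OF aS] assms(2)[OF bS] by linarith
  ultimately show ?thesis by linarith
qed

lemma exp_half_ge: "exp (-1/2::real) \<ge> 1/2"
proof -
  have "exp (1/2::real) \<le> 1 + 1/2 + (1/2)^2" by (rule exp_bound) auto
  hence "exp (1/2::real) \<le> 2" by (simp add: power2_eq_square)
  hence "exp (-1/2::real) * exp (1/2) \<le> exp (-1/2) * 2" by (intro mult_left_mono) auto
  moreover have "exp (-1/2::real) * exp (1/2) = 1" by (simp add: exp_add[symmetric])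
  ultimately show ?thesis by linarith
qed

lemma crossing:
  fixes v lg :: "nat \<Rightarrow> real" and \<alpha> \<beta> \<tau> \<eta> :: real and m K :: nat
  assumes approx: "\<And>k. k \<le> K \<Longrightarrow> \<bar>v k - exp (lg k) * (\<alpha> + \<beta> * real k)\<bar> \<le> \<tau>"
    and tau: "\<tau> \<le> 1/128"
    and incr: "\<And>k. k < K \<Longrightarrow> lg (Suc k) - lg k \<le> \<eta>"
    and eta: "\<eta> \<ge> 0" "real m * \<eta> \<le> 1/2"
    and start: "\<And>k. k \<le> m \<Longrightarrow> \<bar>v k\<bar> \<le> 1/4"
    and fin: "\<bar>v K\<bar> > 1/2"
  shows "\<exists>G. G \<subseteq> {..<K} \<and> real (card G) \<ge> 3/4 * real m - 1 \<and> (\<forall>k\<in>G. 1/128 \<le> \<bar>v k\<bar> \<and> \<bar>v k\<bar> \<le> 1/2)"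
proof -
  define ks where "ks = (LEAST k. 1/2 < \<bar>v k\<bar>)"
  have ks1: "1/2 < \<bar>v ks\<bar>" unfolding ks_def by (rule LeastI[of _ K]) (rule fin)
  have ksK: "ks \<le> K" unfolding ks_def by (rule Least_le) (rule fin)
  have below: "\<bar>v k\<bar> \<le> 1/2" if "k < ks" for k
    using not_less_Least[OF that[unfolded ks_def]] by simp
  have mks: "m < ks"
  proof (rule ccontr)
    assume "\<not> m < ks" hence "ks \<le> m" by simp
    hence "\<bar>v ks\<bar> \<le> 1/4" by (rule start)
    thus False using ks1 by simp
  qed
  define E where "E = exp (lg ks)"
  define Ps where "Ps = \<alpha> + \<beta> * real ks"
  have Epos: "E > 0" by (simp add: E_def)
  have EPs: "E * \<bar>Ps\<bar> \<ge> 63/128"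
  proof -
    have "\<bar>v ks - E * Ps\<bar> \<le> \<tau>" using approx[OF ksK] by (simp add: E_def Ps_def)
    hence "\<bar>E * Ps\<bar> \<ge> 1/2 - \<tau>" using ks1 by linarith
    thus ?thesis using tau Epos by (simp add: abs_mult)
  qed
  define Gj where "Gj = {j \<in> {1..m}. \<bar>Ps - \<beta> * real j\<bar> \<ge> 1/(32*E)}"
  have Gj_card: "real (card Gj) \<ge> 3/4 * real m - 1"
  proof (cases "real m * (E * \<bar>\<beta>\<bar>) \<le> 1/4")
    case True
    have "Gj = {1..m}"
    proof -
      have "\<bar>Ps - \<beta> * real j\<bar> \<ge> 1/(32*E)" if "j \<in> {1..m}" for j
      proof -
        have "E * (\<bar>\<beta>\<bar> * real j) \<le> E * (\<bar>\<beta>\<bar> * real m)"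
          using that Epos by (intro mult_left_mono) auto
        have "\<bar>(Ps - \<beta> * real j) + \<beta> * real j\<bar> \<le> \<bar>Ps - \<beta> * real j\<bar> + \<bar>\<beta> * real j\<bar>" by (rule abs_triangle_ineq)
        hence "\<bar>Ps\<bar> - \<bar>\<beta>\<bar> * real j \<le> \<bar>Ps - \<beta> * real j\<bar>" by (simp add: abs_mult)
        hence "E * (\<bar>Ps\<bar> - \<bar>\<beta>\<bar> * real j) \<le> E * \<bar>Ps - \<beta> * real j\<bar>" using Epos by (intro mult_left_mono) auto
        hence "E * \<bar>Ps - \<beta> * real j\<bar> \<ge> E * \<bar>Ps\<bar> - E * (\<bar>\<beta>\<bar> * real j)"
          by (simp add: algebra_simps)
        hence "E * \<bar>Ps - \<beta> * real j\<bar> \<ge> 1/32"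
          using EPs True \<open>E * (\<bar>\<beta>\<bar> * real j) \<le> E * (\<bar>\<beta>\<bar> * real m)\<close>
          by (simp add: algebra_simps)
        thus ?thesis using Epos by (simp add: field_simps)
      qed
      thus ?thesis unfolding Gj_def by auto
    qed
    thus ?thesis by simp
  next
    case False
    hence bpos: "\<bar>\<beta>\<bar> > 0" using Epos by (auto simp: mult_nonneg_nonneg)
    define B where "B = {j \<in> {1..m}. \<bar>Ps - \<beta> * real j\<bar> < 1/(32*E)}"
    have "real (card B) \<le> 2 * (1/(32*E*\<bar>\<beta>\<bar>)) + 1"
    proof (rule card_close[where c="Ps/\<beta>"])
      show "finite B" by (simp add: B_def)
      show "0 \<le> 1/(32*E*\<bar>\<beta>\<bar>)" using Epos bpos by simp
      fix j assume "j \<in> B"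
      hence "\<bar>Ps - \<beta> * real j\<bar> < 1/(32*E)" by (simp add: B_def)
      moreover have "\<bar>Ps - \<beta> * real j\<bar> = \<bar>\<beta>\<bar> * \<bar>real j - Ps/\<beta>\<bar>"
        using bpos by (simp add: abs_mult[symmetric] algebra_simps)
      ultimately have "\<bar>\<beta>\<bar> * \<bar>real j - Ps/\<beta>\<bar> < 1/(32*E)" by simp
      thus "\<bar>real j - Ps/\<beta>\<bar> < 1/(32*E*\<bar>\<beta>\<bar>)" using bpos Epos by (simp add: field_simps)
    qed
    moreover have "1/(32*E*\<bar>\<beta>\<bar>) \<le> real m / 8"
    proof -
      have "real m * (E * \<bar>\<beta>\<bar>) > 1/4" using False by simp
      thus ?thesis using Epos bpos by (simp add: field_simps)
    qed
    ultimately have cB: "real (card B) \<le> real m / 4 + 1" by simp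
    have "{1..m} = Gj \<union> B" "Gj \<inter> B = {}" by (auto simp: Gj_def B_def)
    hence "card {1..m} = card Gj + card B" by (metis card_Un_disjoint finite_Un finite_atLeastAtMost)
    hence "real m = real (card Gj) + real (card B)" by simp
    thus ?thesis using cB by linarith
  qed
  define G where "G = (\<lambda>j. ks - j) ` Gj"
  have injG: "inj_on (\<lambda>j. ks - j) Gj"
    using mks by (auto simp: inj_on_def Gj_def)
  have cardG: "card G = card Gj" unfolding G_def by (rule card_image[OF injG])
  have props: "1/128 \<le> \<bar>v k\<bar> \<and> \<bar>v k\<bar> \<le> 1/2 \<and> k < K" if kG: "k \<in> G" for k
  proof -
    obtain j where j: "j \<in> Gj" "k = ks - j" using kG unfolding G_def by blast
    have j1: "1 \<le> j" "j \<le> m" and jP: "\<bar>Ps - \<beta> * real j\<bar> \<ge> 1/(32*E)" using j(1) by (auto simp: Gj_def)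
    have kks: "k < ks" "k \<le> K" using j j1 mks ksK by auto
    have rk: "real k = real ks - real j" using j mks j1 by simp
    have "lg ks - lg k \<le> real (ks - k) * \<eta>"
      by (rule incr_sum_le) (use kks ksK incr in auto)
    moreover have "real (ks - k) * \<eta> \<le> real m * \<eta>"
      using j j1 mks eta by (intro mult_right_mono) auto
    ultimately have "lg k \<ge> lg ks - 1/2" using eta by linarith
    hence "exp (lg k) \<ge> exp (lg ks - 1/2)" by simp
    also have "exp (lg ks - 1/2) = E * exp (-1/2)" unfolding E_def by (simp flip: exp_add)
    finally have Ek0: "exp (lg k) \<ge> E * exp (-1/2)" .
    have "E * (1/2) \<le> E * exp (-1/2)" using exp_half_ge Epos by (intro mult_left_mono) auto
    hence Ek: "exp (lg k) \<ge> E / 2" using Ek0 by simp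
    have Pk: "\<alpha> + \<beta> * real k = Ps - \<beta> * real j" by (simp add: Ps_def rk algebra_simps)
    have "exp (lg k) * \<bar>\<alpha> + \<beta> * real k\<bar> \<ge> (E/2) * (1/(32*E))"
      unfolding Pk using Ek jP Epos by (intro mult_mono) auto
    hence "exp (lg k) * \<bar>\<alpha> + \<beta> * real k\<bar> \<ge> 1/64" using Epos by simp
    moreover have "\<bar>v k - exp (lg k) * (\<alpha> + \<beta> * real k)\<bar> \<le> \<tau>" by (rule approx[OF kks(2)])
    ultimately have "\<bar>v k\<bar> \<ge> 1/128" using tau by (simp add: abs_mult)
    thus ?thesis using below[OF kks(1)] kks ksK by simp
  qed
  show ?thesis
    by (rule exI[of _ G]) (use props cardG Gj_card in auto)
qed

lemma bump:
  fixes v lg :: "nat \<Rightarrow> real" and \<alpha> \<beta> \<tau> \<eta> \<delta> :: real and m K :: nat and R :: "nat set"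
  assumes approx: "\<And>k. k \<le> K \<Longrightarrow> \<bar>v k - exp (lg k) * (\<alpha> + \<beta> * real k)\<bar> \<le> \<tau>"
    and tau: "\<tau> \<le> \<delta>" "\<delta> \<le> 1/128"
    and incr: "\<And>k. k < K \<Longrightarrow> lg (Suc k) - lg k \<le> \<eta>"
    and eta: "\<eta> \<ge> 0" "real m * \<eta> \<le> 1/2"
    and start: "\<And>k. k \<le> m \<Longrightarrow> \<bar>v k\<bar> \<le> 1/4"
    and R: "R \<subseteq> {..K}"
    and Rbig: "\<And>k. k \<in> R \<Longrightarrow> exp (lg k) * \<bar>\<alpha> + \<beta> * real k\<bar> \<ge> 2*\<delta>"
  shows "(\<Sum>k\<le>K. (dist_Z (v k))^2) \<ge> min (real (card R) * \<delta>^2) ((3/4 * real m - 1) / 128^2)"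
proof (cases "\<forall>k\<in>R. \<bar>v k\<bar> \<le> 1/2")
  case True
  have "real (card R) * \<delta>^2 = (\<Sum>k\<in>R. \<delta>^2)" by simp
  also have "\<dots> \<le> (\<Sum>k\<in>R. (dist_Z (v k))^2)"
  proof (rule sum_mono)
    fix k assume k: "k \<in> R"
    have "\<bar>v k - exp (lg k) * (\<alpha> + \<beta> * real k)\<bar> \<le> \<tau>" using k R approx by auto
    hence "\<bar>v k\<bar> \<ge> \<delta>" using Rbig[OF k] tau by (simp add: abs_mult)
    moreover have "dist_Z (v k) \<ge> \<bar>v k\<bar>" using True k dist_Z_ge by auto
    moreover have "\<delta> \<ge> 0"
    proof -
      have "\<bar>v 0 - exp (lg 0) * (\<alpha> + \<beta> * real 0)\<bar> \<le> \<tau>" by (rule approx) simp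
      thus ?thesis using tau abs_ge_zero[of "v 0 - exp (lg 0) * (\<alpha> + \<beta> * real 0)"] by linarith
    qed
    ultimately show "\<delta>^2 \<le> (dist_Z (v k))^2" by (intro power_mono) auto
  qed
  also have "\<dots> \<le> (\<Sum>k\<le>K. (dist_Z (v k))^2)"
    by (rule sum_mono2) (use R in auto)
  finally show ?thesis by linarith
next
  case False
  then obtain K' where K': "K' \<in> R" "\<bar>v K'\<bar> > 1/2" by auto
  have K'K: "K' \<le> K" using K' R by auto
  obtain G where G: "G \<subseteq> {..<K'}" "real (card G) \<ge> 3/4 * real m - 1"
      "\<forall>k\<in>G. 1/128 \<le> \<bar>v k\<bar> \<and> \<bar>v k\<bar> \<le> 1/2"
    using crossing[of K' v lg \<alpha> \<beta> \<tau> \<eta> m] approx incr eta start K' K'K tau by force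
  have fG: "finite G" using G(1) finite_subset by blast
  have "(3/4 * real m - 1) / 128^2 \<le> real (card G) * (1/128)^2" using G(2) by (simp add: field_simps)
  also have "\<dots> = (\<Sum>k\<in>G. (1/128)^2)" by simp
  also have "\<dots> \<le> (\<Sum>k\<in>G. (dist_Z (v k))^2)"
  proof (rule sum_mono)
    fix k assume k: "k \<in> G"
    have "dist_Z (v k) \<ge> \<bar>v k\<bar>" using G(3) k dist_Z_ge by auto
    moreover have "\<bar>v k\<bar> \<ge> 1/128" using G(3) k by auto
    ultimately show "(1/128)^2 \<le> (dist_Z (v k))^2" by (intro power_mono) auto
  qed
  also have "\<dots> \<le> (\<Sum>k\<le>K. (dist_Z (v k))^2)"
    by (rule sum_mono2) (use G(1) K'K in auto)
  finally show ?thesis by linarith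
qed

lemma lin_aux1: "(p::real) \<le> q + s \<Longrightarrow> 10*s \<le> 3*e \<Longrightarrow> (p + e)/2 \<le> p \<Longrightarrow> 0 \<le> p \<Longrightarrow> 0 \<le> e \<Longrightarrow> (p + e)/16 \<le> q"
  by argo

lemma select:
  fixes D1 D2 :: real
  shows "(\<forall>t. 0 \<le> t \<and> t \<le> 3/10 \<longrightarrow> \<bar>D1 + D2 * t\<bar> \<ge> (\<bar>D1\<bar> + \<bar>D2\<bar>)/16) \<or>
         (\<forall>t. 6/10 \<le> t \<and> t \<le> 1 \<longrightarrow> \<bar>D1 + D2 * t\<bar> \<ge> (\<bar>D1\<bar> + \<bar>D2\<bar>)/16)"
proof (cases "\<bar>D1\<bar> \<ge> (\<bar>D1\<bar> + \<bar>D2\<bar>)/2")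
  case True
  have "\<bar>D1 + D2 * t\<bar> \<ge> (\<bar>D1\<bar> + \<bar>D2\<bar>)/16" if "0 \<le> t" "t \<le> 3/10" for t
  proof -
    have "\<bar>D2\<bar> * (10 * t) \<le> \<bar>D2\<bar> * 3" using that by (intro mult_left_mono) auto
    hence h10: "10 * \<bar>D2 * t\<bar> \<le> 3 * \<bar>D2\<bar>" using that by (simp add: abs_mult)
    have tri: "\<bar>D1\<bar> \<le> \<bar>D1 + D2 * t\<bar> + \<bar>D2 * t\<bar>" using abs_triangle_ineq4[of "D1 + D2 * t" "D2 * t"] by simp
    show ?thesis by (rule lin_aux1[OF tri h10 True]) auto
  qed
  thus ?thesis by blast
next
  case False
  show ?thesis
  proof (rule ccontr)
    assume "\<not> ?thesis"
    then obtain t1 t2 where t: "0 \<le> t1" "t1 \<le> 3/10" "6/10 \<le> t2" "t2 \<le> 1"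
      "\<bar>D1 + D2 * t1\<bar> < (\<bar>D1\<bar> + \<bar>D2\<bar>)/16" "\<bar>D1 + D2 * t2\<bar> < (\<bar>D1\<bar> + \<bar>D2\<bar>)/16"
      by (auto simp: not_le)
    have "\<bar>(D1 + D2 * t2) - (D1 + D2 * t1)\<bar> \<le> \<bar>D1 + D2 * t2\<bar> + \<bar>D1 + D2 * t1\<bar>" by (rule abs_triangle_ineq4)
    moreover have "(D1 + D2 * t2) - (D1 + D2 * t1) = D2 * (t2 - t1)" by (simp add: algebra_simps)
    ultimately have "\<bar>D2 * (t2 - t1)\<bar> < (\<bar>D1\<bar> + \<bar>D2\<bar>)/8" using t(5,6) by linarith
    moreover have "\<bar>D2\<bar> * 3 \<le> \<bar>D2\<bar> * (10 * (t2 - t1))" using t by (intro mult_left_mono) auto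
    moreover have "\<bar>D2 * (t2 - t1)\<bar> = \<bar>D2\<bar> * (t2 - t1)" using t by (simp add: abs_mult)
    moreover have "\<bar>D2\<bar> * (10 * (t2 - t1)) = 10 * (\<bar>D2\<bar> * (t2 - t1))" by simp
    ultimately show False using False abs_ge_zero[of D1] abs_ge_zero[of D2] by argo
  qed
qed

lemma exp_lw_center:
  assumes z: "z \<ge> 1" and i: "i \<ge> 1" and c: "(real i - z^2)^2 \<le> z^2"
  shows "exp (lw z i) \<ge> exp (-1) / sqrt (2*z)"
proof -
  have "lw z i \<ge> -1 - ln (2*z)/2" using lw_center[OF z i c] by simp
  hence "exp (lw z i) \<ge> exp (-1 - ln (2*z)/2)" by simp
  also have "exp (-1 - ln (2*z)/2) = exp (-1) / exp (ln (2*z)/2)" by (simp add: exp_diff)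
  also have "exp (ln (2*z)/2) = sqrt (2*z)" using z by (simp add: powr_half_sqrt[symmetric] powr_def)
  finally show ?thesis .
qed

lemma sum_shift_le:
  fixes f :: "nat \<Rightarrow> real"
  assumes "\<And>i. f i \<ge> 0" "1 \<le> s" "s + K \<le> n"
  shows "(\<Sum>k\<le>K. f (s + k)) \<le> (\<Sum>i=1..n. f i)"
proof -
  have "(\<Sum>k\<le>K. f (s + k)) = (\<Sum>i\<in>(\<lambda>k. s + k) ` {..K}. f i)"
    by (subst sum.reindex) (auto simp: inj_on_def)
  also have "\<dots> \<le> (\<Sum>i=1..n. f i)"
    by (rule sum_mono2) (use assms in auto)
  finally show ?thesis .
qed

lemma sum_shift_le2:
  fixes f :: "nat \<Rightarrow> real"
  assumes "\<And>i. f i \<ge> 0" "K < s" "s \<le> n"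
  shows "(\<Sum>k\<le>K. f (s - k)) \<le> (\<Sum>i=1..n. f i)"
proof -
  have "(\<Sum>k\<le>K. f (s - k)) = (\<Sum>i\<in>(\<lambda>k. s - k) ` {..K}. f i)"
    by (subst sum.reindex) (use assms in \<open>auto simp: inj_on_def\<close>)
  also have "\<dots> \<le> (\<Sum>i=1..n. f i)"
    by (rule sum_mono2) (use assms in auto)
  finally show ?thesis .
qed

lemma case_left:
  fixes M x y D1 D2 D3 D4 L \<tau> \<eta> \<delta> :: real and m n :: nat
  assumes M: "M > 0" and x: "x \<ge> 200" and xy: "x < y"
    and L: "L \<ge> 1" "8 * L \<le> x"
    and mL: "real m + 2 \<le> L * x"
    and tau: "sqrt M * exp (-((y-x)^2)/2) * (\<bar>D3\<bar> + \<bar>D4\<bar> * y) \<le> \<tau>"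
    and td: "\<tau> \<le> \<delta>" "\<delta> \<le> 1/128"
    and eta: "4 * L / x \<le> \<eta>" "real m * \<eta> \<le> 1/2"
    and start: "sqrt M * exp (-(L^2)/2) * (\<bar>D1\<bar> + \<bar>D2\<bar> * (3*L+2)) + \<tau> \<le> 1/4"
    and big: "2 * \<delta> \<le> sqrt M * (exp (-1) / sqrt (2*x)) * ((\<bar>D1\<bar> + \<bar>D2\<bar>)/16)"
    and n: "x^2 \<le> real n"
  shows "(\<Sum>i=1..n. (dist_Z (D1 * bfun M i x + D2 * cfun M i x + D3 * bfun M i y + D4 * cfun M i y))^2)
           \<ge> min (x/8 * \<delta>^2) ((3/4 * real m - 1)/128^2)"
proof -
  define a where "a = x^2"
  define A where "A = nat \<lfloor>a\<rfloor>"
  define p where "p = nat \<lceil>3*L*x\<rceil>"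
  define q where "q = nat \<lfloor>x/8\<rfloor>"
  define s0 where "s0 = A - p"
  have x0: "x > 0" "x \<ge> 1" using x by auto
  have a0: "a \<ge> 0" by (simp add: a_def)
  have Lx: "L * x \<ge> 1" using mult_mono[of 1 L 1 x] L x0 by simp
  have xLx: "x \<le> L * x" using mult_right_mono[of 1 L x] L x0 by simp
  have xx: "200 * x \<le> x * x" using mult_right_mono[of 200 x x] x by simp
  have hA: "real A \<le> a" "a < real A + 1" using a0 by (simp_all add: A_def)
  have hp: "3*L*x \<le> real p" "real p < 3*L*x + 1" using L x0 unfolding p_def by (simp_all, linarith)
  have hq: "x/8 - 1 < real q" "real q \<le> x/8" using x0 unfolding q_def by (simp_all, linarith)
  have Lx8: "L * x \<le> x * x / 8" using mult_right_mono[of L "x/8" x] L x0 by simp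
  have ax: "a = x * x" by (simp add: a_def power2_eq_square)
  have h3: "3*L*x = 3*(L*x)" by simp
  have pA: "p + 1 \<le> A"
  proof -
    have "real p + 1 < 3*L*x + 2" using h3 hp by (linarith | argo)
    also have "\<dots> \<le> a - 1" using h3 Lx8 ax x xx by (linarith | argo)
    finally show ?thesis using hA by (linarith | argo)
  qed
  have s0r: "real s0 = real A - real p" using pA by (simp add: s0_def)
  have s01: "s0 \<ge> 1" using pA by (simp add: s0_def)
  have s0lo: "real s0 \<ge> a - 3*L*x - 2" using h3 s0r hA hp by (linarith | argo)
  have s0half: "real s0 \<ge> a/2"
  proof -
    have "3*L*x + 2 \<le> a/2" using h3 Lx8 ax x xx by (linarith | argo)
    thus ?thesis using h3 s0lo by (linarith | argo)
  qed
  have q7p: "7*q \<le> p"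
  proof -
    have "7 * real q \<le> 7*x/8" using hq by (linarith | argo)
    also have "\<dots> \<le> 3*L*x" using h3 xLx x0 by (linarith | argo)
    finally show ?thesis using h3 hp by (linarith | argo)
  qed
  have "real m \<le> real p" using h3 mL hp Lx xLx x0 by (linarith | argo)
  hence mp: "m \<le> p" by simp
  define v where "v = (\<lambda>i. D1 * bfun M i x + D2 * cfun M i x + D3 * bfun M i y + D4 * cfun M i y)"
  define v' where "v' = (\<lambda>k. v (s0 + k))"
  define lg where "lg = (\<lambda>k. ln (sqrt M) + lw x (s0 + k))"
  define \<alpha> where "\<alpha> = D1 + D2 * (real s0 - a) / x"
  define \<beta> where "\<beta> = D2 / x"
  define P where "P = (\<lambda>i. D1 + D2 * (real i - a) / x)"
  have y0: "y > 0" using xy x0 by (linarith | argo)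
  have bx: "bfun M i x = sqrt M * exp (lw x i)" for i by (rule bfun_lw[OF x0(1)])
  have by': "bfun M i y = sqrt M * exp (lw y i)" for i by (rule bfun_lw[OF y0])
  have explg: "exp (lg k) = bfun M (s0 + k) x" for k
    using M by (simp add: lg_def bx exp_add)
  have Pab: "\<alpha> + \<beta> * real k = P (s0 + k)" for k
    by (simp add: \<alpha>_def \<beta>_def P_def add_divide_distrib diff_divide_distrib algebra_simps)
  have xpart: "D1 * bfun M i x + D2 * cfun M i x = bfun M i x * P i" for i
    by (simp add: cfun_bfun P_def a_def algebra_simps)
  have ypart: "D3 * bfun M i y + D4 * cfun M i y = bfun M i y * (D3 + D4 * ((real i - y^2) / y))" for i
    by (simp add: cfun_bfun algebra_simps)
  have vsplit: "v i = bfun M i x * P i + (D3 * bfun M i y + D4 * cfun M i y)" for i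
    unfolding v_def using xpart[of i] by simp
  have ysmall: "\<bar>D3 * bfun M i y + D4 * cfun M i y\<bar> \<le> \<tau>" if "real i \<le> a" for i
  proof -
    have "lw y i \<le> lw x i - (y - x)^2/2" by (rule lw_negl_left[OF x0(1) xy]) (use that a_def in simp)
    also have "\<dots> \<le> -((y - x)^2)/2" using lw_le0[OF x0(1), of i] by simp
    finally have "exp (lw y i) \<le> exp (-((y-x)^2)/2)" by simp
    hence b1: "bfun M i y \<le> sqrt M * exp (-((y-x)^2)/2)" using M by (simp add: by')
    have b0: "bfun M i y \<ge> 0" using M by (simp add: by')
    have "x^2 < y^2" using x0 xy by (intro power_strict_mono) auto
    hence yi: "real i - y^2 \<le> 0" using that unfolding a_def by (linarith | argo)
    have u1: "(real i - y^2) / y \<le> 0" using yi y0 by (simp add: divide_nonpos_pos)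
    have u2: "-y \<le> (real i - y^2) / y" using y0 by (simp add: le_divide_eq power2_eq_square)
    have "\<bar>(real i - y^2) / y\<bar> \<le> y" using u1 u2 y0 by (simp add: abs_le_iff)
    hence "\<bar>D4\<bar> * \<bar>(real i - y^2) / y\<bar> \<le> \<bar>D4\<bar> * y" by (intro mult_left_mono) auto
    hence "\<bar>D4 * ((real i - y^2) / y)\<bar> \<le> \<bar>D4\<bar> * y" by (simp add: abs_mult)
    moreover have "\<bar>D3 + D4 * ((real i - y^2) / y)\<bar> \<le> \<bar>D3\<bar> + \<bar>D4 * ((real i - y^2) / y)\<bar>" by (rule abs_triangle_ineq)
    ultimately have Qb: "\<bar>D3 + D4 * ((real i - y^2) / y)\<bar> \<le> \<bar>D3\<bar> + \<bar>D4\<bar> * y" by (linarith | argo)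
    have "\<bar>D3 * bfun M i y + D4 * cfun M i y\<bar> = bfun M i y * \<bar>D3 + D4 * ((real i - y^2) / y)\<bar>"
      using b0 by (simp add: ypart abs_mult)
    also have "\<dots> \<le> (sqrt M * exp (-((y-x)^2)/2)) * (\<bar>D3\<bar> + \<bar>D4\<bar> * y)"
      using b1 b0 Qb by (intro mult_mono) auto
    also have "\<dots> \<le> \<tau>" using tau by simp
    finally show ?thesis .
  qed
  have approx: "\<bar>v' k - exp (lg k) * (\<alpha> + \<beta> * real k)\<bar> \<le> \<tau>" if "k \<le> p" for k
  proof -
    have "real (s0 + k) \<le> a" using that s0r hA by simp
    thus ?thesis using ysmall[of "s0+k"] by (simp add: v'_def vsplit explg Pab)
  qed
  have incr: "lg (Suc k) - lg k \<le> \<eta>" if "k < p" for k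
  proof -
    define i where "i = s0 + k"
    have "lg (Suc k) - lg k = lw x (Suc i) - lw x i" by (simp add: lg_def i_def)
    also have "\<dots> \<le> ((x^2 - real (Suc i)) / real (Suc i)) / 2" by (rule lw_incr_up[OF x0(1)])
    also have "\<dots> \<le> 4 * L / x"
    proof -
      have i1: "real (Suc i) \<ge> a/2" using s0half by (simp add: i_def)
      have i2: "x^2 - real (Suc i) \<le> 3*L*x + 1" using s0lo by (simp add: i_def a_def)
      have "(x^2 - real (Suc i)) / real (Suc i) \<le> (3*L*x + 1) / (a/2)"
      proof (cases "x^2 - real (Suc i) \<le> 0")
        case True
        hence "(x^2 - real (Suc i)) / real (Suc i) \<le> 0" by (simp add: divide_nonpos_pos)
        moreover have "(3*L*x + 1) / (a/2) \<ge> 0" using L x0 a0 by simp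
        ultimately show ?thesis by (linarith | argo)
      next
        case False
        have "(x^2 - real (Suc i)) / real (Suc i) \<le> (3*L*x + 1) / real (Suc i)"
          using i2 by (intro divide_right_mono) auto
        also have "\<dots> \<le> (3*L*x + 1) / (a/2)"
          using i1 x0 L a_def by (intro divide_left_mono) (auto intro: add_nonneg_nonneg)
        finally show ?thesis .
      qed
      also have "(3*L*x + 1) / (a/2) \<le> 8 * L / x"
      proof -
        have e1: "(3*L*x + 1) / (a/2) = (2*(3*L*x + 1)) / (x*x)" unfolding ax by simp
        have e2: "8 * L / x = (8*(L*x)) / (x*x)" using x0 by simp
        have "2*(3*L*x + 1) \<le> 8*(L*x)" using h3 Lx by (linarith | argo)
        hence "(2*(3*L*x + 1)) / (x*x) \<le> (8*(L*x)) / (x*x)" by (intro divide_right_mono) auto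
        thus ?thesis unfolding e1 e2 .
      qed
      finally have "(x^2 - real (Suc i)) / real (Suc i) \<le> 8 * L / x" .
      hence "((x^2 - real (Suc i)) / real (Suc i)) / 2 \<le> (8 * L / x) / 2" by (rule divide_right_mono) simp
      also have "(8 * L / x) / 2 = 4 * L / x" by simp
      finally show ?thesis .
    qed
    also have "\<dots> \<le> \<eta>" by (rule eta(1))
    finally show ?thesis .
  qed
  have "4 * L / x \<ge> 0" using L x0 by simp
  hence eta0: "\<eta> \<ge> 0" using eta(1) by (linarith | argo)
  have startv: "\<bar>v' k\<bar> \<le> 1/4" if "k \<le> m" for k
  proof -
    define i where "i = s0 + k"
    define s1 where "s1 = nat \<lceil>L * x\<rceil>"
    have hs1: "L * x \<le> real s1" "real s1 < L * x + 1" using h3 Lx unfolding s1_def by (simp_all, linarith)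
    have ia: "real i \<le> a" using that mp s0r hA by (simp add: i_def)
    have ilo: "a - real i \<le> 3*L*x + 2" using s0lo by (simp add: i_def)
    have jle: "real (i + s1) \<le> a - L * x - 1"
      using h3 that s0r hA hp hs1 mL by (simp add: i_def)
    have "lw x i \<le> - real (i + s1 - i) * (x^2 - real (i + s1)) / (2 * x^2)"
      by (rule lw_left_tail[OF x0(1)]) (use jle s01 a_def i_def Lx in auto)
    also have "\<dots> \<le> - (L * x) * (L * x) / (2 * x^2)"
    proof -
      have "(L * x) * (L * x) \<le> real s1 * (x^2 - real (i + s1))"
        using hs1 jle a_def Lx by (intro mult_mono) auto
      thus ?thesis using x0 by (simp add: divide_le_eq field_simps)
    qed
    also have "\<dots> = - (L^2) / 2" using x0 by (simp add: field_simps power2_eq_square)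
    finally have "exp (lw x i) \<le> exp (- (L^2)/2)" by simp
    hence bxs: "bfun M i x \<le> sqrt M * exp (- (L^2)/2)" using M by (simp add: bx)
    have "\<bar>P i\<bar> \<le> \<bar>D1\<bar> + \<bar>D2\<bar> * (3*L+2)"
    proof -
      have "\<bar>(real i - a) / x\<bar> \<le> 3*L+2"
      proof -
        have "\<bar>real i - a\<bar> \<le> 3*L*x + 2" using ia ilo by simp
        also have "\<dots> \<le> (3*L+2) * x" using x0 by (simp add: algebra_simps)
        finally have "\<bar>real i - a\<bar> \<le> (3*L+2) * x" .
        hence "\<bar>real i - a\<bar> / x \<le> ((3*L+2) * x) / x" using x0 by (intro divide_right_mono) auto
        also have "((3*L+2) * x) / x = 3*L+2" using x0 by simp
        also have "\<bar>real i - a\<bar> / x = \<bar>(real i - a) / x\<bar>" using x0 by (simp add: abs_divide)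
        finally show ?thesis .
      qed
      hence "\<bar>D2\<bar> * \<bar>(real i - a) / x\<bar> \<le> \<bar>D2\<bar> * (3*L+2)" by (intro mult_left_mono) auto
      moreover have "\<bar>D2 * (real i - a) / x\<bar> = \<bar>D2\<bar> * \<bar>(real i - a) / x\<bar>" by (simp add: abs_mult abs_div_pos x0)
      moreover have "\<bar>D1 + D2 * (real i - a) / x\<bar> \<le> \<bar>D1\<bar> + \<bar>D2 * (real i - a) / x\<bar>" by (rule abs_triangle_ineq)
      ultimately show ?thesis unfolding P_def by (linarith | argo)
    qed
    hence Pb: "\<bar>P i\<bar> \<le> \<bar>D1\<bar> + \<bar>D2\<bar> * (3*L+2)" .
    have bx0: "bfun M i x \<ge> 0" using M by (simp add: bx)
    have "bfun M i x * \<bar>P i\<bar> \<le> (sqrt M * exp (- (L^2)/2)) * (\<bar>D1\<bar> + \<bar>D2\<bar> * (3*L+2))"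
      by (rule mult_mono[OF bxs Pb]) (use M in auto)
    hence "\<bar>bfun M i x * P i\<bar> \<le> (sqrt M * exp (- (L^2)/2)) * (\<bar>D1\<bar> + \<bar>D2\<bar> * (3*L+2))"
      using bx0 by (simp add: abs_mult)
    moreover have "\<bar>D3 * bfun M i y + D4 * cfun M i y\<bar> \<le> \<tau>" by (rule ysmall[OF ia])
    moreover have "\<bar>bfun M i x * P i + (D3 * bfun M i y + D4 * cfun M i y)\<bar> \<le> \<bar>bfun M i x * P i\<bar> + \<bar>D3 * bfun M i y + D4 * cfun M i y\<bar>"
      by (rule abs_triangle_ineq)
    ultimately have "\<bar>v i\<bar> \<le> sqrt M * exp (-(L^2)/2) * (\<bar>D1\<bar> + \<bar>D2\<bar> * (3*L+2)) + \<tau>"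
      unfolding vsplit by (linarith | argo)
    thus ?thesis using start by (simp add: v'_def i_def)
  qed
  define t where "t = (\<lambda>k. (a - real (s0 + k)) / x)"
  have Pt: "P (s0 + k) = D1 + (- D2) * t k" for k
    by (simp add: P_def t_def algebra_simps diff_divide_distrib add_divide_distrib)
  have tk: "t k = (a - real A + real (p - k)) / x" if "k \<le> p" for k
    using that s0r by (simp add: t_def)
  obtain R where R: "R \<subseteq> {..p}" "real (card R) \<ge> x/8" "\<And>k. k \<in> R \<Longrightarrow> p - 7*q \<le> k"
      "\<And>k. k \<in> R \<Longrightarrow> \<bar>P (s0 + k)\<bar> \<ge> (\<bar>D1\<bar> + \<bar>D2\<bar>)/16"
  proof -
    have sel: "(\<forall>t. 0 \<le> t \<and> t \<le> 3/10 \<longrightarrow> \<bar>D1 + (-D2) * t\<bar> \<ge> (\<bar>D1\<bar> + \<bar>-D2\<bar>)/16) \<or>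
         (\<forall>t. 6/10 \<le> t \<and> t \<le> 1 \<longrightarrow> \<bar>D1 + (-D2) * t\<bar> \<ge> (\<bar>D1\<bar> + \<bar>-D2\<bar>)/16)"
      by (rule select)
    show ?thesis
    proof (cases "\<forall>t. 0 \<le> t \<and> t \<le> 3/10 \<longrightarrow> \<bar>D1 + (-D2) * t\<bar> \<ge> (\<bar>D1\<bar> + \<bar>-D2\<bar>)/16")
      case True
      show ?thesis
      proof (rule that[of "{p - q..p}"])
        show "{p - q..p} \<subseteq> {..p}" by auto
        show "real (card {p - q..p}) \<ge> x/8" using q7p hq by simp
        show "p - 7*q \<le> k" if "k \<in> {p - q..p}" for k using that by auto
        show "\<bar>P (s0 + k)\<bar> \<ge> (\<bar>D1\<bar> + \<bar>D2\<bar>)/16" if "k \<in> {p - q..p}" for k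
        proof -
          have kp: "k \<le> p" "p - k \<le> q" using that by auto
          have "t k \<ge> 0" using tk[OF kp(1)] hA x0 by simp
          moreover have "t k \<le> 3/10"
          proof -
            have "a - real A + real (p - k) \<le> 1 + x/8" using hA hq kp by (simp add: of_nat_diff)
            also have "\<dots> \<le> 3/10 * x" using x by simp
            finally show ?thesis using tk[OF kp(1)] x0 by (simp add: divide_le_eq)
          qed
          ultimately show ?thesis using True Pt[of k] by simp
        qed
      qed
    next
      case False
      hence F: "\<forall>t. 6/10 \<le> t \<and> t \<le> 1 \<longrightarrow> \<bar>D1 + (-D2) * t\<bar> \<ge> (\<bar>D1\<bar> + \<bar>-D2\<bar>)/16" using sel by blast
      show ?thesis
      proof (rule that[of "{p - 7*q..p - 5*q}"])
        show "{p - 7*q..p - 5*q} \<subseteq> {..p}" by auto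
        have "card {p - 7*q..p - 5*q} = 2*q + 1" using q7p by simp
        thus "real (card {p - 7*q..p - 5*q}) \<ge> x/8" using hq by simp
        show "p - 7*q \<le> k" if "k \<in> {p - 7*q..p - 5*q}" for k using that by auto
        show "\<bar>P (s0 + k)\<bar> \<ge> (\<bar>D1\<bar> + \<bar>D2\<bar>)/16" if "k \<in> {p - 7*q..p - 5*q}" for k
        proof -
          have kp: "k \<le> p" "5*q \<le> p - k" "p - k \<le> 7*q" using that q7p by auto
          have r1: "real (p - k) \<ge> 5 * real q" "real (p - k) \<le> 7 * real q" using kp by (linarith | argo)+
          have "t k \<ge> 6/10"
          proof -
            have "6/10 * x \<le> 5 * (x/8 - 1)" using x by simp
            also have "\<dots> \<le> a - real A + real (p - k)" using hA hq r1 by (linarith | argo)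
            finally show ?thesis using tk[OF kp(1)] x0 by (simp add: le_divide_eq)
          qed
          moreover have "t k \<le> 1"
          proof -
            have "a - real A + real (p - k) \<le> 1 + 7 * (x/8)" using hA hq r1 by (linarith | argo)
            also have "\<dots> \<le> x" using x by simp
            finally show ?thesis using tk[OF kp(1)] x0 by (simp add: divide_le_eq)
          qed
          ultimately show ?thesis using F Pt[of k] by simp
        qed
      qed
    qed
  qed
  have Rbig: "exp (lg k) * \<bar>\<alpha> + \<beta> * real k\<bar> \<ge> 2*\<delta>" if "k \<in> R" for k
  proof -
    define i where "i = s0 + k"
    have kp: "k \<le> p" "p - k \<le> 7*q" using R(1) R(3)[OF that] that by auto
    have "\<bar>real i - a\<bar> \<le> 1 + 7 * real q"
    proof -
      have "real i = real A - real (p - k)" using kp s0r by (simp add: i_def of_nat_diff)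
      moreover have "real (p - k) \<le> 7 * real q" using kp by (linarith | argo)
      ultimately show ?thesis using hA by (linarith | argo)
    qed
    also have "\<dots> \<le> x" using hq x by (linarith | argo)
    finally have "\<bar>real i - a\<bar> \<le> x" .
    hence c: "(real i - x^2)^2 \<le> x^2" unfolding a_def using x0
      by (metis abs_le_square_iff abs_of_nonneg less_imp_le)
    have i1: "i \<ge> 1" using s01 by (simp add: i_def)
    have e: "exp (lw x i) \<ge> exp (-1) / sqrt (2*x)" by (rule exp_lw_center[OF x0(2) i1 c])
    have "2 * \<delta> \<le> sqrt M * (exp (-1) / sqrt (2*x)) * ((\<bar>D1\<bar> + \<bar>D2\<bar>)/16)" by (rule big)
    also have "\<dots> \<le> sqrt M * exp (lw x i) * \<bar>P i\<bar>"
      using e R(4)[OF that] M x0 by (intro mult_mono) (auto simp: i_def)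
    also have "\<dots> = exp (lg k) * \<bar>\<alpha> + \<beta> * real k\<bar>" by (simp add: explg Pab bx i_def)
    finally show ?thesis .
  qed
  have main: "(\<Sum>k\<le>p. (dist_Z (v' k))^2) \<ge> min (real (card R) * \<delta>^2) ((3/4 * real m - 1) / 128^2)"
    by (rule bump[where lg=lg and \<alpha>=\<alpha> and \<beta>=\<beta> and \<tau>=\<tau> and \<eta>=\<eta>])
       (use approx td incr eta0 eta(2) startv R(1) Rbig in auto)
  have "min (x/8 * \<delta>^2) ((3/4 * real m - 1)/128^2) \<le> min (real (card R) * \<delta>^2) ((3/4 * real m - 1) / 128^2)"
    using R(2) by (intro min.mono mult_right_mono) auto
  also note main
  also have "(\<Sum>k\<le>p. (dist_Z (v' k))^2) \<le> (\<Sum>i=1..n. (dist_Z (v i))^2)"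
    unfolding v'_def
    by (rule sum_shift_le) (use s01 pA s0r hA n a_def in \<open>auto simp: s0_def\<close>)
  finally show ?thesis by (simp add: v_def)
qed

lemma case_right:
  fixes M x y D1 D2 D3 D4 L \<tau> \<eta> \<delta> :: real and m n :: nat
  assumes M: "M > 0" and x0: "x > 0" and y: "y \<ge> 200" and xy: "x < y"
    and L: "L \<ge> 1" "8 * L \<le> y"
    and mL: "real m + 2 \<le> L * y"
    and tau: "sqrt M * exp (-((y-x)^2)/2) * (\<bar>D1\<bar> + \<bar>D2\<bar> * ((y^2 + 3*(L*y) + 2)/x)) \<le> \<tau>"
    and td: "\<tau> \<le> \<delta>" "\<delta> \<le> 1/128"
    and eta: "4 * L / y \<le> \<eta>" "real m * \<eta> \<le> 1/2"
    and start: "sqrt M * exp (-(L^2)/4) * (\<bar>D3\<bar> + \<bar>D4\<bar> * (3*L+2)) + \<tau> \<le> 1/4"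
    and big: "2 * \<delta> \<le> sqrt M * (exp (-1) / sqrt (2*y)) * ((\<bar>D3\<bar> + \<bar>D4\<bar>)/16)"
    and n: "y^2 + 3*(L*y) + 2 \<le> real n"
  shows "(\<Sum>i=1..n. (dist_Z (D1 * bfun M i x + D2 * cfun M i x + D3 * bfun M i y + D4 * cfun M i y))^2)
           \<ge> min (y/8 * \<delta>^2) ((3/4 * real m - 1)/128^2)"
proof -
  define b where "b = y^2"
  define B where "B = nat \<lceil>b\<rceil>"
  define p where "p = nat \<lceil>3*(L*y)\<rceil>"
  define q where "q = nat \<lfloor>y/8\<rfloor>"
  define it where "it = B + p"
  have y0: "y > 0" "y \<ge> 1" using y by auto
  have b0: "b \<ge> 0" by (simp add: b_def)
  have Ly: "L * y \<ge> 1" using mult_mono[of 1 L 1 y] L y0 by simp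
  have yLy: "y \<le> L * y" using mult_right_mono[of 1 L y] L y0 by simp
  have yy: "200 * y \<le> y * y" using mult_right_mono[of 200 y y] y by simp
  have hB: "b \<le> real B" "real B < b + 1" using b0 by (simp_all add: B_def) linarith
  have hp: "3*(L*y) \<le> real p" "real p < 3*(L*y) + 1" using Ly unfolding p_def by (simp_all, linarith)
  have hq: "y/8 - 1 < real q" "real q \<le> y/8" using y0 unfolding q_def by (simp_all, linarith)
  have Ly8: "L * y \<le> y * y / 8" using mult_right_mono[of L "y/8" y] L y0 by simp
  have by2: "b = y * y" by (simp add: b_def power2_eq_square)
  have itr: "real it = real B + real p" by (simp add: it_def)
  have it_up: "real it \<le> b + 3*(L*y) + 2" using itr hB hp by (linarith | argo)
  have itb: "real it + 1 \<le> 2 * b" using it_up Ly8 by2 yy y by (linarith | argo)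
  have "real B \<ge> 1" using hB by2 yy y by linarith
  hence B1: "B \<ge> 1" by simp
  have q7p: "7*q \<le> p"
  proof -
    have "7 * real q \<le> 7*y/8" using hq by (linarith | argo)
    also have "\<dots> \<le> 3*(L*y)" using yLy y0 by (linarith | argo)
    finally show ?thesis using hp by (linarith | argo)
  qed
  have "real m \<le> real p" using mL hp Ly yLy by (linarith | argo)
  hence mp: "m \<le> p" by simp
  define v where "v = (\<lambda>i. D1 * bfun M i x + D2 * cfun M i x + D3 * bfun M i y + D4 * cfun M i y)"
  define v' where "v' = (\<lambda>k. v (it - k))"
  define lg where "lg = (\<lambda>k. ln (sqrt M) + lw y (it - k))"
  define \<alpha> where "\<alpha> = D3 + D4 * (real it - b) / y"
  define \<beta> where "\<beta> = - D4 / y"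
  define P where "P = (\<lambda>i. D3 + D4 * (real i - b) / y)"
  have bx: "bfun M i x = sqrt M * exp (lw x i)" for i by (rule bfun_lw[OF x0])
  have by': "bfun M i y = sqrt M * exp (lw y i)" for i by (rule bfun_lw[OF y0(1)])
  have explg: "exp (lg k) = bfun M (it - k) y" for k
    using M by (simp add: lg_def by' exp_add)
  have Pab: "\<alpha> + \<beta> * real k = P (it - k)" if "k \<le> it" for k
    using that by (simp add: \<alpha>_def \<beta>_def P_def of_nat_diff add_divide_distrib diff_divide_distrib algebra_simps)
  have ypart: "D3 * bfun M i y + D4 * cfun M i y = bfun M i y * P i" for i
    by (simp add: cfun_bfun P_def b_def algebra_simps)
  have xpart: "D1 * bfun M i x + D2 * cfun M i x = bfun M i x * (D1 + D2 * ((real i - x^2) / x))" for i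
    by (simp add: cfun_bfun algebra_simps)
  have vsplit: "v i = bfun M i y * P i + (D1 * bfun M i x + D2 * cfun M i x)" for i
    unfolding v_def using ypart[of i] by simp
  have xsmall: "\<bar>D1 * bfun M i x + D2 * cfun M i x\<bar> \<le> \<tau>" if "b \<le> real i" "i \<le> it" for i
  proof -
    have "lw x i \<le> lw y i - (y - x)^2/2" by (rule lw_negl_right[OF x0 xy]) (use that b_def in simp)
    also have "\<dots> \<le> -((y - x)^2)/2" using lw_le0[OF y0(1), of i] by simp
    finally have "exp (lw x i) \<le> exp (-((y-x)^2)/2)" by simp
    hence b1: "bfun M i x \<le> sqrt M * exp (-((y-x)^2)/2)" using M by (simp add: bx)
    have b0': "bfun M i x \<ge> 0" using M by (simp add: bx)
    have "x^2 < y^2" using x0 xy by (intro power_strict_mono) auto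
    hence u0: "real i - x^2 \<ge> 0" using that unfolding b_def by (linarith | argo)
    have "real i \<le> real it" using that(2) by simp
    hence "real i - x^2 \<le> y^2 + 3*(L*y) + 2" using it_up b_def zero_le_power2[of x] by linarith
    hence "(real i - x^2) / x \<le> (y^2 + 3*(L*y) + 2) / x" using x0 by (intro divide_right_mono) auto
    moreover have "(real i - x^2) / x \<ge> 0" using u0 x0 by simp
    ultimately have "\<bar>(real i - x^2) / x\<bar> \<le> (y^2 + 3*(L*y) + 2) / x" by simp
    hence "\<bar>D2\<bar> * \<bar>(real i - x^2) / x\<bar> \<le> \<bar>D2\<bar> * ((y^2 + 3*(L*y) + 2) / x)" by (intro mult_left_mono) auto
    hence "\<bar>D2 * ((real i - x^2) / x)\<bar> \<le> \<bar>D2\<bar> * ((y^2 + 3*(L*y) + 2) / x)" by (simp add: abs_mult)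
    moreover have "\<bar>D1 + D2 * ((real i - x^2) / x)\<bar> \<le> \<bar>D1\<bar> + \<bar>D2 * ((real i - x^2) / x)\<bar>" by (rule abs_triangle_ineq)
    ultimately have Qb: "\<bar>D1 + D2 * ((real i - x^2) / x)\<bar> \<le> \<bar>D1\<bar> + \<bar>D2\<bar> * ((y^2 + 3*(L*y) + 2) / x)" by (linarith | argo)
    have "\<bar>D1 * bfun M i x + D2 * cfun M i x\<bar> = bfun M i x * \<bar>D1 + D2 * ((real i - x^2) / x)\<bar>"
      using b0' by (simp add: xpart abs_mult)
    also have "\<dots> \<le> (sqrt M * exp (-((y-x)^2)/2)) * (\<bar>D1\<bar> + \<bar>D2\<bar> * ((y^2 + 3*(L*y) + 2) / x))"
      using b1 b0' Qb by (intro mult_mono) auto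
    also have "\<dots> \<le> \<tau>" using tau by simp
    finally show ?thesis .
  qed
  have approx: "\<bar>v' k - exp (lg k) * (\<alpha> + \<beta> * real k)\<bar> \<le> \<tau>" if "k \<le> p" for k
  proof -
    have "b \<le> real (it - k)" using that hB by (simp add: it_def of_nat_diff)
    moreover have "k \<le> it" using that by (simp add: it_def)
    ultimately show ?thesis using xsmall[of "it - k"] by (simp add: v'_def vsplit explg Pab)
  qed
  have incr: "lg (Suc k) - lg k \<le> \<eta>" if "k < p" for k
  proof -
    define j where "j = it - Suc k"
    have jj: "it - k = Suc j" using that by (simp add: j_def it_def)
    have "lg (Suc k) - lg k = lw y j - lw y (Suc j)" by (simp add: lg_def jj j_def)
    also have "\<dots> \<le> (real (Suc j) - y^2) / (2 * y^2)" by (rule lw_incr_down[OF y0(1)])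
    also have "\<dots> \<le> 4 * L / y"
    proof -
      have "real (Suc j) \<le> real it" using jj by (metis diff_le_self of_nat_le_iff)
      hence "real (Suc j) - y^2 \<le> 3*(L*y) + 2" using it_up b_def by simp
      also have "\<dots> \<le> 8*(L*y)" using Ly by (linarith | argo)
      finally have "(real (Suc j) - y^2) / (2 * y^2) \<le> (8*(L*y)) / (2 * y^2)"
        using y0 by (intro divide_right_mono) auto
      also have "(8*(L*y)) / (2 * y^2) = 4 * L / y" using y0 by (simp add: power2_eq_square)
      finally show ?thesis .
    qed
    also have "\<dots> \<le> \<eta>" by (rule eta(1))
    finally show ?thesis .
  qed
  have "4 * L / y \<ge> 0" using L y0 by simp
  hence eta0: "\<eta> \<ge> 0" using eta(1) by (linarith | argo)
  have startv: "\<bar>v' k\<bar> \<le> 1/4" if "k \<le> m" for k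
  proof -
    define i where "i = it - k"
    define s1 where "s1 = nat \<lceil>L * y\<rceil>"
    have hs1: "L * y \<le> real s1" "real s1 < L * y + 1" using Ly unfolding s1_def by (simp_all, linarith)
    have ir: "real i = real B + real p - real k" using that mp by (simp add: i_def it_def of_nat_diff)
    have ib: "b \<le> real i" "i \<le> it" using ir hB hp that mp by (auto simp: i_def)
    have ihi: "real i - b \<le> 3*(L*y) + 2" using ib it_up by (linarith | argo)
    have jge: "real (i - s1) \<ge> b + L * y + 1" and s1i: "s1 \<le> i"
    proof -
      have "real i - real s1 \<ge> b + L * y + 1" using ir hB hp hs1 mL that by (linarith | argo)
      moreover from this have "s1 \<le> i" using b0 Ly by (linarith | argo)
      ultimately show "real (i - s1) \<ge> b + L * y + 1" "s1 \<le> i" by (simp_all add: of_nat_diff)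
    qed
    have "lw y i \<le> - real (i - (i - s1)) * (real (i - s1) + 1 - y^2) / (2 * (real (i - s1) + 1))"
      by (rule lw_right_tail[OF y0(1)]) (use jge b_def Ly in auto)
    also have "\<dots> \<le> - (L * y) * (L * y) / (2 * (2 * b))"
    proof -
      have i1: "real (i - (i - s1)) = real s1" using s1i by simp
      have f1: "(L * y) * (L * y) \<le> real s1 * (real (i - s1) + 1 - y^2)"
        using hs1 jge b_def Ly by (intro mult_mono) auto
      have f2: "real (i - s1) + 1 \<le> 2 * b" using itb ib s1i by (simp add: of_nat_diff)
      have f3: "0 < 2 * (real (i - s1) + 1)" by simp
      have f4: "(L * y) * (L * y) \<ge> 0" by simp
      have f5: "0 \<le> real s1 * (real (i - s1) + 1 - y^2)" using f1 f4 by argo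
      have f6: "2 * (real (i - s1) + 1) \<le> 2 * (2 * b)" using f2 by argo
      have "(L * y) * (L * y) / (2 * (2 * b)) \<le> real s1 * (real (i - s1) + 1 - y^2) / (2 * (real (i - s1) + 1))"
        by (rule frac_le[OF f5 f1 f3 f6])
      thus ?thesis using i1 by simp
    qed
    also have "\<dots> = - (L^2) / 4" using y0 by (simp add: b_def field_simps power2_eq_square)
    finally have "exp (lw y i) \<le> exp (- (L^2)/4)" by simp
    hence bys: "bfun M i y \<le> sqrt M * exp (- (L^2)/4)" using M by (simp add: by')
    have "\<bar>P i\<bar> \<le> \<bar>D3\<bar> + \<bar>D4\<bar> * (3*L+2)"
    proof -
      have "\<bar>(real i - b) / y\<bar> \<le> 3*L+2"
      proof -
        have "\<bar>real i - b\<bar> \<le> 3*(L*y) + 2" using ib ihi by simp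
        also have "\<dots> \<le> (3*L+2) * y" using y0 by (simp add: algebra_simps)
        finally have "\<bar>real i - b\<bar> \<le> (3*L+2) * y" .
        hence "\<bar>real i - b\<bar> / y \<le> ((3*L+2) * y) / y" using y0 by (intro divide_right_mono) auto
        also have "((3*L+2) * y) / y = 3*L+2" using y0 by simp
        also have "\<bar>real i - b\<bar> / y = \<bar>(real i - b) / y\<bar>" using y0 by (simp add: abs_divide)
        finally show ?thesis .
      qed
      hence "\<bar>D4\<bar> * \<bar>(real i - b) / y\<bar> \<le> \<bar>D4\<bar> * (3*L+2)" by (intro mult_left_mono) auto
      moreover have "\<bar>D4 * (real i - b) / y\<bar> = \<bar>D4\<bar> * \<bar>(real i - b) / y\<bar>" by (simp add: abs_mult abs_div_pos y0)
      moreover have "\<bar>D3 + D4 * (real i - b) / y\<bar> \<le> \<bar>D3\<bar> + \<bar>D4 * (real i - b) / y\<bar>" by (rule abs_triangle_ineq)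
      ultimately show ?thesis unfolding P_def by (linarith | argo)
    qed
    hence Pb: "\<bar>P i\<bar> \<le> \<bar>D3\<bar> + \<bar>D4\<bar> * (3*L+2)" .
    have by0: "bfun M i y \<ge> 0" using M by (simp add: by')
    have "bfun M i y * \<bar>P i\<bar> \<le> (sqrt M * exp (- (L^2)/4)) * (\<bar>D3\<bar> + \<bar>D4\<bar> * (3*L+2))"
      by (rule mult_mono[OF bys Pb]) (use M in auto)
    hence "\<bar>bfun M i y * P i\<bar> \<le> (sqrt M * exp (- (L^2)/4)) * (\<bar>D3\<bar> + \<bar>D4\<bar> * (3*L+2))"
      using by0 by (simp add: abs_mult)
    moreover have "\<bar>D1 * bfun M i x + D2 * cfun M i x\<bar> \<le> \<tau>" by (rule xsmall[OF ib])
    moreover have "\<bar>bfun M i y * P i + (D1 * bfun M i x + D2 * cfun M i x)\<bar> \<le> \<bar>bfun M i y * P i\<bar> + \<bar>D1 * bfun M i x + D2 * cfun M i x\<bar>"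
      by (rule abs_triangle_ineq)
    ultimately have "\<bar>v i\<bar> \<le> sqrt M * exp (-(L^2)/4) * (\<bar>D3\<bar> + \<bar>D4\<bar> * (3*L+2)) + \<tau>"
      unfolding vsplit by (linarith | argo)
    thus ?thesis using start by (simp add: v'_def i_def)
  qed
  define t where "t = (\<lambda>k. (real (it - k) - b) / y)"
  have Pt: "P (it - k) = D3 + D4 * t k" for k
    by (simp add: P_def t_def)
  have tk: "t k = (real B - b + real (p - k)) / y" if "k \<le> p" for k
    using that by (simp add: t_def it_def of_nat_diff)
  obtain R where R: "R \<subseteq> {..p}" "real (card R) \<ge> y/8" "\<And>k. k \<in> R \<Longrightarrow> p - 7*q \<le> k"
      "\<And>k. k \<in> R \<Longrightarrow> \<bar>P (it - k)\<bar> \<ge> (\<bar>D3\<bar> + \<bar>D4\<bar>)/16"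
  proof -
    have sel: "(\<forall>t. 0 \<le> t \<and> t \<le> 3/10 \<longrightarrow> \<bar>D3 + D4 * t\<bar> \<ge> (\<bar>D3\<bar> + \<bar>D4\<bar>)/16) \<or>
         (\<forall>t. 6/10 \<le> t \<and> t \<le> 1 \<longrightarrow> \<bar>D3 + D4 * t\<bar> \<ge> (\<bar>D3\<bar> + \<bar>D4\<bar>)/16)"
      by (rule select)
    show ?thesis
    proof (cases "\<forall>t. 0 \<le> t \<and> t \<le> 3/10 \<longrightarrow> \<bar>D3 + D4 * t\<bar> \<ge> (\<bar>D3\<bar> + \<bar>D4\<bar>)/16")
      case True
      show ?thesis
      proof (rule that[of "{p - q..p}"])
        show "{p - q..p} \<subseteq> {..p}" by auto
        show "real (card {p - q..p}) \<ge> y/8" using q7p hq by simp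
        show "p - 7*q \<le> k" if "k \<in> {p - q..p}" for k using that by auto
        show "\<bar>P (it - k)\<bar> \<ge> (\<bar>D3\<bar> + \<bar>D4\<bar>)/16" if "k \<in> {p - q..p}" for k
        proof -
          have kp: "k \<le> p" "p - k \<le> q" using that by auto
          have "t k \<ge> 0" using tk[OF kp(1)] hB y0 by simp
          moreover have "t k \<le> 3/10"
          proof -
            have "real B - b + real (p - k) \<le> 1 + y/8" using hB hq kp by (simp add: of_nat_diff)
            also have "\<dots> \<le> 3/10 * y" using y by simp
            finally show ?thesis using tk[OF kp(1)] y0 by (simp add: divide_le_eq)
          qed
          ultimately show ?thesis using True Pt[of k] by simp
        qed
      qed
    next
      case False
      hence F: "\<forall>t. 6/10 \<le> t \<and> t \<le> 1 \<longrightarrow> \<bar>D3 + D4 * t\<bar> \<ge> (\<bar>D3\<bar> + \<bar>D4\<bar>)/16" using sel by blast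
      show ?thesis
      proof (rule that[of "{p - 7*q..p - 5*q}"])
        show "{p - 7*q..p - 5*q} \<subseteq> {..p}" by auto
        have "card {p - 7*q..p - 5*q} = 2*q + 1" using q7p by simp
        thus "real (card {p - 7*q..p - 5*q}) \<ge> y/8" using hq by simp
        show "p - 7*q \<le> k" if "k \<in> {p - 7*q..p - 5*q}" for k using that by auto
        show "\<bar>P (it - k)\<bar> \<ge> (\<bar>D3\<bar> + \<bar>D4\<bar>)/16" if "k \<in> {p - 7*q..p - 5*q}" for k
        proof -
          have kp: "k \<le> p" "5*q \<le> p - k" "p - k \<le> 7*q" using that q7p by auto
          have r1: "real (p - k) \<ge> 5 * real q" "real (p - k) \<le> 7 * real q" using kp by linarith+
          have "t k \<ge> 6/10"
          proof -
            have "6/10 * y \<le> 5 * (y/8 - 1)" using y by simp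
            also have "\<dots> \<le> real B - b + real (p - k)" using hB hq r1 by (linarith | argo)
            finally show ?thesis using tk[OF kp(1)] y0 by (simp add: le_divide_eq)
          qed
          moreover have "t k \<le> 1"
          proof -
            have "real B - b + real (p - k) \<le> 1 + 7 * (y/8)" using hB hq r1 by (linarith | argo)
            also have "\<dots> \<le> y" using y by simp
            finally show ?thesis using tk[OF kp(1)] y0 by (simp add: divide_le_eq)
          qed
          ultimately show ?thesis using F Pt[of k] by simp
        qed
      qed
    qed
  qed
  have Rbig: "exp (lg k) * \<bar>\<alpha> + \<beta> * real k\<bar> \<ge> 2*\<delta>" if "k \<in> R" for k
  proof -
    define i where "i = it - k"
    have kp: "k \<le> p" "p - k \<le> 7*q" using R(1) R(3)[OF that] that by auto
    have "\<bar>real i - b\<bar> \<le> 1 + 7 * real q"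
    proof -
      have "real i = real B + real (p - k)" using kp by (simp add: i_def it_def of_nat_diff)
      moreover have "real (p - k) \<le> 7 * real q" using kp by (linarith | argo)
      ultimately show ?thesis using hB by (linarith | argo)
    qed
    also have "\<dots> \<le> y" using hq y by (linarith | argo)
    finally have "\<bar>real i - b\<bar> \<le> y" .
    hence c: "(real i - y^2)^2 \<le> y^2" unfolding b_def using y0
      by (metis abs_le_square_iff abs_of_nonneg less_imp_le)
    have i1: "i \<ge> 1" using B1 kp by (simp add: i_def it_def)
    have e: "exp (lw y i) \<ge> exp (-1) / sqrt (2*y)" by (rule exp_lw_center[OF y0(2) i1 c])
    have "2 * \<delta> \<le> sqrt M * (exp (-1) / sqrt (2*y)) * ((\<bar>D3\<bar> + \<bar>D4\<bar>)/16)" by (rule big)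
    also have "\<dots> \<le> sqrt M * exp (lw y i) * \<bar>P i\<bar>"
      using e R(4)[OF that] M y0 by (intro mult_mono) (auto simp: i_def)
    also have "\<dots> = exp (lg k) * \<bar>\<alpha> + \<beta> * real k\<bar>"
      using kp by (simp add: explg Pab by' i_def it_def)
    finally show ?thesis .
  qed
  have main: "(\<Sum>k\<le>p. (dist_Z (v' k))^2) \<ge> min (real (card R) * \<delta>^2) ((3/4 * real m - 1) / 128^2)"
    by (rule bump[where lg=lg and \<alpha>=\<alpha> and \<beta>=\<beta> and \<tau>=\<tau> and \<eta>=\<eta>])
       (use approx td incr eta0 eta(2) startv R(1) Rbig in auto)
  have "min (y/8 * \<delta>^2) ((3/4 * real m - 1)/128^2) \<le> min (real (card R) * \<delta>^2) ((3/4 * real m - 1) / 128^2)"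
    using R(2) by (intro min.mono mult_right_mono) auto
  also note main
  also have "(\<Sum>k\<le>p. (dist_Z (v' k))^2) \<le> (\<Sum>i=1..n. (dist_Z (v i))^2)"
    unfolding v'_def
  proof (rule sum_shift_le2)
    show "p < it" using B1 by (simp add: it_def)
    have "real it \<le> real n" using it_up n b_def by linarith
    thus "it \<le> n" by simp
  qed (simp add: dist_Z_def)
  finally show ?thesis by (simp add: v_def)
qed

lemma sq_le_sum4: "(a::real)^2 + b^2 + c^2 + d^2 \<le> (\<bar>a\<bar> + \<bar>b\<bar>)^2 + (\<bar>c\<bar> + \<bar>d\<bar>)^2"
  by (simp add: power2_eq_square algebra_simps abs_mult[symmetric])

lemma abs_le_W: assumes "(a::real)^2 \<le> S" "S \<le> W^2" "W \<ge> 0" shows "\<bar>a\<bar> \<le> W"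
proof -
  have "a^2 \<le> W^2" using assms by linarith
  thus ?thesis using assms(3) by (metis abs_le_square_iff abs_of_nonneg)
qed

theorem theorem3p17:
  fixes A C eps_g r c1 c2 :: real
  assumes "A > 0" "C > 0" "eps_g > 0" "eps_g < 1/2" "r > 0" "0 < c1" "c1 < c2"
  shows "\<exists>N0. \<forall>M::real. \<forall>n::nat. M \<ge> N0 \<longrightarrow> c2 * M \<le> sqrt (real n) - M \<longrightarrow>
    (\<forall>x y. c1 * M \<le> x \<longrightarrow> x < y \<longrightarrow> y \<le> c2 * M \<longrightarrow> \<bar>x - y\<bar> \<ge> M powr eps_g \<longrightarrow>
      \<not> (\<exists>D1 D2 D3 D4 :: real.
            r^2 \<le> D1^2 + D2^2 + D3^2 + D4^2 \<and> D1^2 + D2^2 + D3^2 + D4^2 \<le> M powr A \<and>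
            (\<Sum>i=1..n. (dist_Z (D1 * bfun M i x + D2 * cfun M i x + D3 * bfun M i y + D4 * cfun M i y))^2)
              \<le> C * ln M))"
proof -
  have A0: "A > 0" and C0: "C > 0" and e0: "eps_g > 0" and r0: "r > 0" and c10: "c1 > 0" and c20: "c2 > 0"
    using assms by auto
  define \<delta> where "\<delta> = min (1/128) (exp (-1) * r / (64 * sqrt (2*c2)))"
  define K0 where "K0 = 32768 * C"
  define T where "T = (\<lambda>M::real. M powr (A/2) * (1 + c2*M + (c2^2*M^2 + 3*c2*M^2 + 2)/(c1*M)))"
  have d0: "\<delta> > 0" using r0 c20 by (simp add: \<delta>_def)
  have K00: "K0 > 0" using C0 by (simp add: K0_def)
  have ev1: "eventually (\<lambda>M::real. c1 * M \<ge> 200) at_top" using c10 by real_asymp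
  have ev2: "eventually (\<lambda>M::real. 8 * M powr (1/4) \<le> c1 * M) at_top" using c10 by real_asymp
  have ev3: "eventually (\<lambda>M::real. M powr (1/4) \<ge> 1) at_top" by real_asymp
  have ev4: "eventually (\<lambda>M::real. K0 * ln M + 3 \<le> M powr (1/4) * (c1 * M)) at_top" using c10 K00 by real_asymp
  have ev5: "eventually (\<lambda>M::real. (K0 * ln M + 1) * (4 * M powr (1/4) / (c1 * M)) \<le> 1/2) at_top"
    using c10 K00 by real_asymp
  have ev6: "eventually (\<lambda>M::real. sqrt M * exp (-(M powr (2*eps_g))/2) * T M \<le> \<delta>) at_top"
    unfolding T_def using c10 c20 A0 e0 d0 by real_asymp
  have ev7: "eventually (\<lambda>M::real. sqrt M * exp (-(M powr (1/2))/4) * (M powr (A/2) * (3 + 3 * M powr (1/4))) \<le> 1/8) at_top"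
    using A0 by real_asymp
  have ev8: "eventually (\<lambda>M::real. c1 * M / 8 * \<delta>^2 > C * ln M) at_top" using c10 C0 d0 by real_asymp
  have ev9: "eventually (\<lambda>M::real. 8192 * C * ln M > 1) at_top" using C0 by real_asymp
  have ev10: "eventually (\<lambda>M::real. 3 * M powr (1/4) \<le> 2 * M) at_top" by real_asymp
  have ev11: "eventually (\<lambda>M::real. M \<ge> 2) at_top" by real_asymp
  have ev12: "eventually (\<lambda>M::real. M powr (1/4) \<le> M) at_top" by real_asymp
  have ev: "eventually (\<lambda>M::real. c1 * M \<ge> 200 \<and> 8 * M powr (1/4) \<le> c1 * M \<and> M powr (1/4) \<ge> 1 \<and>
      K0 * ln M + 3 \<le> M powr (1/4) * (c1 * M) \<and> (K0 * ln M + 1) * (4 * M powr (1/4) / (c1 * M)) \<le> 1/2 \<and>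
      sqrt M * exp (-(M powr (2*eps_g))/2) * T M \<le> \<delta> \<and>
      sqrt M * exp (-(M powr (1/2))/4) * (M powr (A/2) * (3 + 3 * M powr (1/4))) \<le> 1/8 \<and>
      c1 * M / 8 * \<delta>^2 > C * ln M \<and> 8192 * C * ln M > 1 \<and> 3 * M powr (1/4) \<le> 2 * M \<and> M \<ge> 2 \<and>
      M powr (1/4) \<le> M) at_top"
    by (intro eventually_conj ev1 ev2 ev3 ev4 ev5 ev6 ev7 ev8 ev9 ev10 ev11 ev12)
  then obtain N0 where N0: "\<And>M. M \<ge> N0 \<Longrightarrow> c1 * M \<ge> 200 \<and> 8 * M powr (1/4) \<le> c1 * M \<and> M powr (1/4) \<ge> 1 \<and>
      K0 * ln M + 3 \<le> M powr (1/4) * (c1 * M) \<and> (K0 * ln M + 1) * (4 * M powr (1/4) / (c1 * M)) \<le> 1/2 \<and>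
      sqrt M * exp (-(M powr (2*eps_g))/2) * T M \<le> \<delta> \<and>
      sqrt M * exp (-(M powr (1/2))/4) * (M powr (A/2) * (3 + 3 * M powr (1/4))) \<le> 1/8 \<and>
      c1 * M / 8 * \<delta>^2 > C * ln M \<and> 8192 * C * ln M > 1 \<and> 3 * M powr (1/4) \<le> 2 * M \<and> M \<ge> 2 \<and>
      M powr (1/4) \<le> M"
    by (auto simp: eventually_at_top_linorder)
  show ?thesis
  proof (intro exI[of _ N0] allI impI notI)
    fix M :: real and n :: nat and x y :: real
    assume MN: "M \<ge> N0" and hn: "c2 * M \<le> sqrt (real n) - M" and hx: "c1 * M \<le> x" and xy: "x < y"
      and hy: "y \<le> c2 * M" and hd: "\<bar>x - y\<bar> \<ge> M powr eps_g"
    assume "\<exists>D1 D2 D3 D4 :: real.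
            r^2 \<le> D1^2 + D2^2 + D3^2 + D4^2 \<and> D1^2 + D2^2 + D3^2 + D4^2 \<le> M powr A \<and>
            (\<Sum>i=1..n. (dist_Z (D1 * bfun M i x + D2 * cfun M i x + D3 * bfun M i y + D4 * cfun M i y))^2)
              \<le> C * ln M"
    then obtain D1 D2 D3 D4 where D: "r^2 \<le> D1^2 + D2^2 + D3^2 + D4^2" "D1^2 + D2^2 + D3^2 + D4^2 \<le> M powr A"
      and Sle: "(\<Sum>i=1..n. (dist_Z (D1 * bfun M i x + D2 * cfun M i x + D3 * bfun M i y + D4 * cfun M i y))^2) \<le> C * ln M"
      by blast
    note NM = N0[OF MN]
    define L where "L = M powr (1/4)"
    define \<eta> where "\<eta> = 4 * L / (c1 * M)"
    define m where "m = nat \<lceil>K0 * ln M\<rceil>"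
    define \<tau> where "\<tau> = sqrt M * exp (-(M powr (2*eps_g))/2) * T M"
    define W where "W = M powr (A/2)"
    have M2: "M \<ge> 2" and M0: "M > 0" using NM by auto
    have lnM: "ln M > 0" using M2 by simp
    have x200: "x \<ge> 200" using NM hx by linarith
    have x0: "x > 0" using x200 by simp
    have y200: "y \<ge> 200" using x200 xy by linarith
    have L1: "L \<ge> 1" using NM by (simp add: L_def)
    have LM: "L \<le> M" using NM by (simp add: L_def)
    have L8x: "8 * L \<le> x" using NM hx by (simp add: L_def)
    have L8y: "8 * L \<le> y" using L8x xy by linarith
    have c1M: "c1 * M > 0" using c10 M0 by simp
    have k0: "K0 * ln M > 0" using K00 lnM by simp
    have mm: "real m = real_of_int \<lceil>K0 * ln M\<rceil>" unfolding m_def using k0 by simp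
    have hm: "K0 * ln M \<le> real m" "real m \<le> K0 * ln M + 1" unfolding mm
      using le_of_int_ceiling[of "K0 * ln M"] of_int_ceiling_le_add_one[of "K0 * ln M"] by simp_all
    have LxM: "L * (c1 * M) \<le> L * x" using hx L1 by (intro mult_left_mono) auto
    have LxY: "L * x \<le> L * y" using xy L1 by (intro mult_left_mono) auto
    have mLx: "real m + 2 \<le> L * x" using hm NM LxM unfolding L_def by linarith
    have mLy: "real m + 2 \<le> L * y" using mLx LxY by linarith
    have etax: "4 * L / x \<le> \<eta>" unfolding \<eta>_def using hx L1 c1M by (intro divide_left_mono) auto
    have etay: "4 * L / y \<le> \<eta>" unfolding \<eta>_def using hx xy L1 c1M by (intro divide_left_mono) auto
    have eta0: "\<eta> \<ge> 0" using L1 c1M by (simp add: \<eta>_def)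
    have meta: "real m * \<eta> \<le> 1/2"
    proof -
      have "real m * \<eta> \<le> (K0 * ln M + 1) * \<eta>" using hm eta0 by (intro mult_right_mono) auto
      also have "\<dots> \<le> 1/2" using NM by (simp add: \<eta>_def L_def)
      finally show ?thesis .
    qed
    have td: "\<tau> \<le> \<delta>" using NM by (simp add: \<tau>_def)
    have d128: "\<delta> \<le> 1/128" by (simp add: \<delta>_def)
    have W0: "W \<ge> 0" by (simp add: W_def)
    have WW: "M powr A = W^2" using M0 by (simp add: W_def power2_eq_square powr_add[symmetric])
    have S0: "D1^2 \<le> D1^2 + D2^2 + D3^2 + D4^2" "D2^2 \<le> D1^2 + D2^2 + D3^2 + D4^2"
      "D3^2 \<le> D1^2 + D2^2 + D3^2 + D4^2" "D4^2 \<le> D1^2 + D2^2 + D3^2 + D4^2" by simp_all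
    have DW: "\<bar>D1\<bar> \<le> W" "\<bar>D2\<bar> \<le> W" "\<bar>D3\<bar> \<le> W" "\<bar>D4\<bar> \<le> W"
      using abs_le_W[OF S0(1) _ W0] abs_le_W[OF S0(2) _ W0] abs_le_W[OF S0(3) _ W0] abs_le_W[OF S0(4) _ W0]
        D(2) WW by auto
    have LL: "L^2 = M powr (1/2)" using M0 by (simp add: L_def power2_eq_square powr_add[symmetric])
    have dist: "(y - x)^2 \<ge> M powr (2*eps_g)"
    proof -
      have "M powr eps_g \<le> y - x" using hd xy by simp
      hence "(M powr eps_g)^2 \<le> (y - x)^2" by (intro power_mono) auto
      moreover have "(M powr eps_g)^2 = M powr (2*eps_g)" using M0
        by (simp add: power2_eq_square powr_add[symmetric])
      ultimately show ?thesis by simp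
    qed
    have expd: "exp (-((y-x)^2)/2) \<le> exp (-(M powr (2*eps_g))/2)" using dist by simp
    have TM: "T M = W * (1 + c2*M + (c2^2*M^2 + 3*c2*M^2 + 2)/(c1*M))" by (simp add: T_def W_def)
    have Tfrac0: "(c2^2*M^2 + 3*c2*M^2 + 2)/(c1*M) \<ge> 0" using c20 c1M by simp
    have sqM: "sqrt M * exp (-1) / sqrt (2*z) \<ge> exp (-1) / sqrt (2*c2)" if "0 < z" "z \<le> c2 * M" for z
    proof -
      have "sqrt (2*z) \<le> sqrt (2*c2*M)" using that by simp
      also have "\<dots> = sqrt (2*c2) * sqrt M" by (simp add: real_sqrt_mult)
      finally have h: "sqrt (2*z) \<le> sqrt (2*c2) * sqrt M" .
      have "exp (-1) / sqrt (2*c2) = sqrt M * exp (-1) / (sqrt (2*c2) * sqrt M)" using M0 by simp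
      also have "\<dots> \<le> sqrt M * exp (-1) / sqrt (2*z)"
        using h that M0 c20 by (intro divide_left_mono) auto
      finally show ?thesis .
    qed
    have bigr: "2 * \<delta> \<le> exp (-1) / sqrt (2*c2) * (r/32)"
    proof -
      have "\<delta> \<le> exp (-1) * r / (64 * sqrt (2*c2))" by (simp add: \<delta>_def)
      thus ?thesis by (simp add: field_simps)
    qed
    have fin: "min (z/8 * \<delta>^2) ((3/4 * real m - 1)/128^2) > C * ln M" if "z \<ge> c1 * M" for z
    proof -
      have "z/8 * \<delta>^2 \<ge> c1 * M / 8 * \<delta>^2" using that by (intro mult_right_mono) auto
      hence a1: "z/8 * \<delta>^2 > C * ln M" using NM by linarith
      have "(3/4 * real m - 1)/128^2 \<ge> (3/4 * (K0 * ln M) - 1)/128^2" using hm by (intro divide_right_mono) auto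
      moreover have "(3/4 * (K0 * ln M) - 1)/128^2 > C * ln M" using NM by (simp add: K0_def field_simps)
      ultimately have a2: "(3/4 * real m - 1)/128^2 > C * ln M" by linarith
      show ?thesis using a1 a2 by simp
    qed
    have sqn: "y + M \<le> sqrt (real n)" using hn hy by linarith
    have Lam: "r^2 \<le> (\<bar>D1\<bar> + \<bar>D2\<bar>)^2 + (\<bar>D3\<bar> + \<bar>D4\<bar>)^2" using D(1) sq_le_sum4[of D1 D2 D3 D4] by linarith
    show False
    proof (cases "\<bar>D1\<bar> + \<bar>D2\<bar> \<ge> \<bar>D3\<bar> + \<bar>D4\<bar>")
      case True
      have sq: "(\<bar>D3\<bar> + \<bar>D4\<bar>)^2 \<le> (\<bar>D1\<bar> + \<bar>D2\<bar>)^2" using True by (intro power_mono) auto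
      have "(r/2)^2 = r^2/4" by (simp add: power_divide)
      hence "(r/2)^2 \<le> (\<bar>D1\<bar> + \<bar>D2\<bar>)^2" using Lam sq zero_le_power2[of "\<bar>D1\<bar> + \<bar>D2\<bar>"] by linarith
      hence Lx: "r/2 \<le> \<bar>D1\<bar> + \<bar>D2\<bar>" by (rule power2_le_imp_le) simp
      have "(\<Sum>i=1..n. (dist_Z (D1 * bfun M i x + D2 * cfun M i x + D3 * bfun M i y + D4 * cfun M i y))^2)
           \<ge> min (x/8 * \<delta>^2) ((3/4 * real m - 1)/128^2)"
      proof (rule case_left[OF M0 x200 xy L1 L8x mLx _ td d128 etax meta])
        show "sqrt M * exp (-((y-x)^2)/2) * (\<bar>D3\<bar> + \<bar>D4\<bar> * y) \<le> \<tau>"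
        proof -
          have "\<bar>D4\<bar> * y \<le> W * (c2 * M)" using DW hy y200 W0 by (intro mult_mono) auto
          moreover have "W * (1 + c2*M + (c2^2*M^2 + 3*c2*M^2 + 2)/(c1*M)) = W + W * (c2 * M) + W * ((c2^2*M^2 + 3*c2*M^2 + 2)/(c1*M))"
            by (simp add: algebra_simps)
          moreover have "W * ((c2^2*M^2 + 3*c2*M^2 + 2)/(c1*M)) \<ge> 0" using W0 Tfrac0 by (rule mult_nonneg_nonneg)
          ultimately have "\<bar>D3\<bar> + \<bar>D4\<bar> * y \<le> T M" unfolding TM using DW by linarith
          moreover have "\<bar>D3\<bar> + \<bar>D4\<bar> * y \<ge> 0" using y200 by simp
          ultimately have "sqrt M * exp (-((y-x)^2)/2) * (\<bar>D3\<bar> + \<bar>D4\<bar> * y) \<le> sqrt M * exp (-(M powr (2*eps_g))/2) * T M"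
            using expd M0 by (intro mult_mono) auto
          thus ?thesis by (simp add: \<tau>_def)
        qed
        show "sqrt M * exp (-(L^2)/2) * (\<bar>D1\<bar> + \<bar>D2\<bar> * (3*L+2)) + \<tau> \<le> 1/4"
        proof -
          have "\<bar>D2\<bar> * (3*L+2) \<le> W * (3*L+2)" using DW L1 by (intro mult_right_mono) auto
          hence e1: "\<bar>D1\<bar> + \<bar>D2\<bar> * (3*L+2) \<le> W * (3 + 3*L)" using DW by (simp add: algebra_simps)
          have e2: "exp (-(L^2)/2) \<le> exp (-(M powr (1/2))/4)" using LL L1 by simp
          have "sqrt M * exp (-(L^2)/2) * (\<bar>D1\<bar> + \<bar>D2\<bar> * (3*L+2)) \<le> sqrt M * exp (-(M powr (1/2))/4) * (W * (3 + 3*L))"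
            using e1 e2 M0 L1 by (intro mult_mono) auto
          also have "\<dots> \<le> 1/8" using NM by (simp add: W_def L_def)
          finally show ?thesis using td d128 by linarith
        qed
        show "2 * \<delta> \<le> sqrt M * (exp (-1) / sqrt (2*x)) * ((\<bar>D1\<bar> + \<bar>D2\<bar>)/16)"
        proof -
          have "exp (-1) / sqrt (2*c2) * (r/32) \<le> (sqrt M * exp (-1) / sqrt (2*x)) * ((\<bar>D1\<bar> + \<bar>D2\<bar>)/16)"
            using sqM[OF x0] hx xy hy Lx r0 M0 x0 by (intro mult_mono) auto
          thus ?thesis using bigr by simp
        qed
        show "x^2 \<le> real n"
        proof -
          have "x \<le> sqrt (real n)" using sqn xy M0 by linarith
          hence "x^2 \<le> (sqrt (real n))^2" using x0 by (intro power_mono) auto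
          thus ?thesis by simp
        qed
      qed
      moreover have "min (x/8 * \<delta>^2) ((3/4 * real m - 1)/128^2) > C * ln M" using fin hx by simp
      ultimately show False using Sle by linarith
    next
      case False
      have sq: "(\<bar>D1\<bar> + \<bar>D2\<bar>)^2 \<le> (\<bar>D3\<bar> + \<bar>D4\<bar>)^2" using False by (intro power_mono) auto
      have "(r/2)^2 = r^2/4" by (simp add: power_divide)
      hence "(r/2)^2 \<le> (\<bar>D3\<bar> + \<bar>D4\<bar>)^2" using Lam sq zero_le_power2[of "\<bar>D3\<bar> + \<bar>D4\<bar>"] by linarith
      hence Ly: "r/2 \<le> \<bar>D3\<bar> + \<bar>D4\<bar>" by (rule power2_le_imp_le) simp
      have "(\<Sum>i=1..n. (dist_Z (D1 * bfun M i x + D2 * cfun M i x + D3 * bfun M i y + D4 * cfun M i y))^2)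
           \<ge> min (y/8 * \<delta>^2) ((3/4 * real m - 1)/128^2)"
      proof (rule case_right[OF M0 x0 y200 xy L1 L8y mLy _ td d128 etay meta])
        show "sqrt M * exp (-((y-x)^2)/2) * (\<bar>D1\<bar> + \<bar>D2\<bar> * ((y^2 + 3*(L*y) + 2)/x)) \<le> \<tau>"
        proof -
          have "(y^2 + 3*(L*y) + 2)/x \<le> (c2^2*M^2 + 3*c2*M^2 + 2)/(c1*M)"
          proof (rule frac_le)
            show "0 \<le> c2^2*M^2 + 3*c2*M^2 + 2" using c20 by simp
            have "y^2 \<le> (c2*M)^2" using hy y200 by (intro power_mono) auto
            moreover have "L * y \<le> M * (c2 * M)" using LM hy L1 y200 by (intro mult_mono) auto
            ultimately show "y^2 + 3*(L*y) + 2 \<le> c2^2*M^2 + 3*c2*M^2 + 2"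
              by (simp add: power2_eq_square algebra_simps)
            show "0 < c1 * M" by (rule c1M)
            show "c1 * M \<le> x" by (rule hx)
          qed
          hence "\<bar>D2\<bar> * ((y^2 + 3*(L*y) + 2)/x) \<le> W * ((c2^2*M^2 + 3*c2*M^2 + 2)/(c1*M))"
            using DW W0 x0 L1 y200 by (intro mult_mono) auto
          moreover have "W * (1 + c2*M + (c2^2*M^2 + 3*c2*M^2 + 2)/(c1*M)) = W + W * (c2 * M) + W * ((c2^2*M^2 + 3*c2*M^2 + 2)/(c1*M))"
            by (simp add: algebra_simps)
          moreover have "W * (c2 * M) \<ge> 0" using W0 c20 M0 by simp
          ultimately have "\<bar>D1\<bar> + \<bar>D2\<bar> * ((y^2 + 3*(L*y) + 2)/x) \<le> T M" unfolding TM using DW by linarith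
          moreover have "\<bar>D1\<bar> + \<bar>D2\<bar> * ((y^2 + 3*(L*y) + 2)/x) \<ge> 0" using x0 L1 y200 by simp
          ultimately have "sqrt M * exp (-((y-x)^2)/2) * (\<bar>D1\<bar> + \<bar>D2\<bar> * ((y^2 + 3*(L*y) + 2)/x)) \<le> sqrt M * exp (-(M powr (2*eps_g))/2) * T M"
            using expd M0 by (intro mult_mono) auto
          thus ?thesis by (simp add: \<tau>_def)
        qed
        show "sqrt M * exp (-(L^2)/4) * (\<bar>D3\<bar> + \<bar>D4\<bar> * (3*L+2)) + \<tau> \<le> 1/4"
        proof -
          have "\<bar>D4\<bar> * (3*L+2) \<le> W * (3*L+2)" using DW L1 by (intro mult_right_mono) auto
          hence e1: "\<bar>D3\<bar> + \<bar>D4\<bar> * (3*L+2) \<le> W * (3 + 3*L)" using DW by (simp add: algebra_simps)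
          have e2: "exp (-(L^2)/4) \<le> exp (-(M powr (1/2))/4)" using LL by simp
          have "sqrt M * exp (-(L^2)/4) * (\<bar>D3\<bar> + \<bar>D4\<bar> * (3*L+2)) \<le> sqrt M * exp (-(M powr (1/2))/4) * (W * (3 + 3*L))"
            using e1 e2 M0 L1 by (intro mult_mono) auto
          also have "\<dots> \<le> 1/8" using NM by (simp add: W_def L_def)
          finally show ?thesis using td d128 by linarith
        qed
        show "2 * \<delta> \<le> sqrt M * (exp (-1) / sqrt (2*y)) * ((\<bar>D3\<bar> + \<bar>D4\<bar>)/16)"
        proof -
          have "exp (-1) / sqrt (2*c2) * (r/32) \<le> (sqrt M * exp (-1) / sqrt (2*y)) * ((\<bar>D3\<bar> + \<bar>D4\<bar>)/16)"
            using sqM[of y] x0 xy hy Ly r0 M0 by (intro mult_mono) auto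
          thus ?thesis using bigr by simp
        qed
        show "y^2 + 3*(L*y) + 2 \<le> real n"
        proof -
          have "(y + M)^2 \<le> (sqrt (real n))^2" using sqn y200 M0 by (intro power_mono) auto
          hence h: "(y + M)^2 \<le> real n" by simp
          have "3 * L \<le> 2 * M" using NM by (simp add: L_def)
          hence "3 * L * y \<le> 2 * M * y" using y200 by (intro mult_right_mono) auto
          moreover have "2 * 1 \<le> M * M" using M2 by (intro mult_mono) auto
          ultimately have "y^2 + 3*(L*y) + 2 \<le> (y + M)^2" by (simp add: power2_eq_square algebra_simps)
          thus ?thesis using h by linarith
        qed
      qed
      moreover have "min (y/8 * \<delta>^2) ((3/4 * real m - 1)/128^2) > C * ln M" using fin hx xy by simp
      ultimately show False using Sle by linarith
    qed
  qed
qed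

end
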